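(* Consider an open quantum system on a finite-dimensional Hilbert space $\mathcal H$ with Hamiltonian $H$. Let $W_1,\dots,W_N$ be observables commuting with $H$, each positive semidefinite with smallest eigenvalue $0$; let $\widetilde W_n=\sum_{\lambda=1}^nW_\lambda$ and fix $n<N$. Let $L_1,\dots,L_M$ be coupling operators and $L_{M+1},\dots,L_K$ additional coupling operators; $\mathcal G_M,\mathfrak D_M$ denote generator and dissipation functional with couplings $L_1,\dots,L_M$, and $\mathcal G,\mathfrak D$ those with all couplings $L_1,\dots,L_K$; let $d_n$ be the smallest eigenvalue of $\widetilde W_n$. (i) If $\mathcal G_M(\widetilde W_n-d_n)\le-c(\widetilde W_n-d_n)$ for some $c>0$ and $\mathcal G(W_{n+1})+\sum_{k=M+1}^K\mathcal G(\widetilde W_n)_{L_k}\le-cW_{n+1}$, then $\widetilde W_{n+1}$ is asymptotically ground-state stable for the system with couplings $L_1,\dots,L_K$. (ii) If $\mathcal G_M(\widetilde W_n)\le0$ and $\mathfrak D_M(\widetilde W_n-d_n)\ge c(\widetilde W_n-d_n)$ for some $c>0$, if $\mathcal G(W_{n+1})+\sum_{k=M+1}^K\mathcal G(\widetilde W_n)_{L_k}\le0$, and if $\mathfrak D(W_{n+1})+2\sum_{k=1}^K\operatorname{Re}\big([L_k^\dagger,\widetilde W_n][W_{n+1},L_k]\big)\ge cW_{n+1}$, then $\widetilde W_{n+1}$ is asymptotically ground-state stable for the system with couplings $L_1,\dots,L_K$.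
   Context: With couplings $L_1,\dots,L_J$ the density state (positive semidefinite, trace one) evolves by $\dot\rho_t=-i[H,\rho_t]+\sum_{k=1}^J\big(L_k\rho_tL_k^\dagger-\tfrac12L_k^\dagger L_k\rho_t-\tfrac12\rho_tL_k^\dagger L_k\big)$; the generator on observables commuting with $H$ is $\sum_{k=1}^J\mathcal G(X)_{L_k}$, $\mathcal G(X)_{L_k}=L_k^\dagger XL_k-\tfrac12L_k^\dagger L_kX-\tfrac12XL_k^\dagger L_k$, and $\frac{d}{dt}\operatorname{tr}(X\rho_t)=\operatorname{tr}(\mathcal G(X)\rho_t)$. The dissipation functional is $\mathfrak D(X)=\mathcal G(X^\dagger X)-\mathcal G(X^\dagger)X-X^\dagger\mathcal G(X)$, equal to $\sum_k[L_k^\dagger,X][X,L_k]$ for self-adjoint $X$. $\operatorname{Re}(Y)=\tfrac12(Y+Y^\dagger)$. Constants are multiples of the identity. An observable $X$ with smallest eigenvalue $d$ is asymptotically ground-state stable if $\operatorname{tr}(X\rho_t)\to d$ as $t\to\infty$ for every initial density state. *)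

theory Defs
  imports "HOL-Analysis.Analysis"
begin

text \<open>Operators on the finite-dimensional Hilbert space are complex square matrices
  indexed by a finite type 'n (dimension CARD('n)).\<close>

type_synonym 'n cmat = "complex^'n^'n"

definition cadj :: "'n::finite cmat \<Rightarrow> 'n cmat" where
  "cadj A = (\<chi> i j. cnj (A $ j $ i))"

definition hermitian :: "'n::finite cmat \<Rightarrow> bool" where
  "hermitian A \<longleftrightarrow> cadj A = A"

definition psd :: "'n::finite cmat \<Rightarrow> bool" where
  "psd A \<longleftrightarrow> hermitian A \<and>
     (\<forall>v::complex^'n. 0 \<le> Re (\<Sum>i\<in>UNIV. cnj (v $ i) * (A *v v) $ i))"

definition op_le :: "'n::finite cmat \<Rightarrow> 'n cmat \<Rightarrow> bool" where
  "op_le A B \<longleftrightarrow> psd (B - A)"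

definition eigenvalues :: "'n::finite cmat \<Rightarrow> complex set" where
  "eigenvalues A = {\<mu>. \<exists>v::complex^'n. v \<noteq> 0 \<and> A *v v = \<mu> *s v}"

text \<open>Smallest eigenvalue (meant for self-adjoint operators, whose eigenvalues are real).\<close>
definition min_eig :: "'n::finite cmat \<Rightarrow> real" where
  "min_eig A = Min (Re ` eigenvalues A)"

definition const :: "real \<Rightarrow> 'n::finite cmat" where
  "const d = mat (complex_of_real d)"

definition density :: "'n::finite cmat \<Rightarrow> bool" where
  "density \<rho> \<longleftrightarrow> psd \<rho> \<and> trace \<rho> = 1"

definition comm :: "'n::finite cmat \<Rightarrow> 'n cmat \<Rightarrow> 'n cmat" where
  "comm A B = A ** B - B ** A"

definition genL :: "'n::finite cmat \<Rightarrow> 'n cmat \<Rightarrow> 'n cmat" where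
  "genL L X = cadj L ** X ** L - (1/2::real) *\<^sub>R (cadj L ** L ** X)
              - (1/2::real) *\<^sub>R (X ** cadj L ** L)"

text \<open>Heisenberg-picture generator with Hamiltonian H and couplings L k, k \<in> I.
  On observables commuting with H it equals the sum of the genL terms.\<close>
definition gen :: "'n::finite cmat \<Rightarrow> (nat \<Rightarrow> 'n cmat) \<Rightarrow> nat set \<Rightarrow> 'n cmat \<Rightarrow> 'n cmat" where
  "gen H L I X = mat \<i> ** comm H X + (\<Sum>k\<in>I. genL (L k) X)"

definition diss :: "'n::finite cmat \<Rightarrow> (nat \<Rightarrow> 'n cmat) \<Rightarrow> nat set \<Rightarrow> 'n cmat \<Rightarrow> 'n cmat" where
  "diss H L I X = gen H L I (cadj X ** X) - gen H L I (cadj X) ** X - cadj X ** gen H L I X"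

definition mRe :: "'n::finite cmat \<Rightarrow> 'n cmat" where
  "mRe Y = (1/2::real) *\<^sub>R (Y + cadj Y)"

definition lindblad :: "'n::finite cmat \<Rightarrow> (nat \<Rightarrow> 'n cmat) \<Rightarrow> nat set \<Rightarrow> 'n cmat \<Rightarrow> 'n cmat" where
  "lindblad H L I \<rho> = - (mat \<i> ** comm H \<rho>) +
     (\<Sum>k\<in>I. L k ** \<rho> ** cadj (L k) - (1/2::real) *\<^sub>R (cadj (L k) ** L k ** \<rho>)
              - (1/2::real) *\<^sub>R (\<rho> ** cadj (L k) ** L k))"

definition ags_stable :: "'n::finite cmat \<Rightarrow> (nat \<Rightarrow> 'n cmat) \<Rightarrow> nat set \<Rightarrow> 'n cmat \<Rightarrow> bool" where
  "ags_stable H L I X \<longleftrightarrow>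
     (\<forall>\<rho>::real \<Rightarrow> 'n cmat. density (\<rho> 0) \<and>
        (\<forall>t\<ge>0. (\<rho> has_vector_derivative lindblad H L I (\<rho> t)) (at t within {0..}))
        \<longrightarrow> ((\<lambda>t. trace (X ** \<rho> t)) \<longlongrightarrow> complex_of_real (min_eig X)) at_top)"

end

theory Submission
  imports Defs
begin

definition cinner :: "complex^'n::finite \<Rightarrow> complex^'n \<Rightarrow> complex" where
  "cinner x y = (\<Sum>i\<in>UNIV. cnj (x$i) * y$i)"

definition qf :: "'n::finite cmat \<Rightarrow> complex^'n \<Rightarrow> complex" where
  "qf A v = cinner v (A *v v)"

lemma psd_qf: "psd A \<longleftrightarrow> hermitian A \<and> (\<forall>v. 0 \<le> Re (qf A v))"
  by (simp add: psd_def qf_def cinner_def)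

lemma cinner_add_right: "cinner x (y + z) = cinner x y + cinner x z"
  by (simp add: cinner_def distrib_left sum.distrib)
lemma cinner_add_left: "cinner (x + y) z = cinner x z + cinner y z"
  by (simp add: cinner_def distrib_right sum.distrib)
lemma cinner_diff_right: "cinner x (y - z) = cinner x y - cinner x z"
  by (simp add: cinner_def right_diff_distrib sum_subtractf)
lemma cinner_diff_left: "cinner (x - y) z = cinner x z - cinner y z"
  by (simp add: cinner_def left_diff_distrib sum_subtractf)
lemma cinner_scale_right: "cinner x (c *s y) = c * cinner x y"
  by (simp add: cinner_def sum_distrib_left mult_ac)
lemma cinner_scale_left: "cinner (c *s x) y = cnj c * cinner x y"
  by (simp add: cinner_def sum_distrib_left mult_ac)
lemma cinner_zero_left[simp]: "cinner 0 y = 0" by (simp add: cinner_def)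
lemma cinner_zero_right[simp]: "cinner x 0 = 0" by (simp add: cinner_def)
lemma cinner_cnj: "cnj (cinner x y) = cinner y x"
  by (simp add: cinner_def mult_ac)

lemma cinner_self: "cinner x x = complex_of_real ((norm x)^2)"
proof -
  have "cinner x x = (\<Sum>i\<in>UNIV. complex_of_real ((cmod (x$i))^2))"
    unfolding cinner_def by (rule sum.cong) (auto simp: complex_norm_square[symmetric] mult.commute)
  also have "\<dots> = complex_of_real (\<Sum>i\<in>UNIV. (cmod (x$i))^2)" by simp
  also have "(\<Sum>i\<in>UNIV. (cmod (x$i))^2) = (norm x)^2"
    by (simp add: norm_vec_def L2_set_def sum_nonneg)
  finally show ?thesis .
qed

lemma inner_cinner: "inner x y = Re (cinner x y)"
  by (simp add: inner_vec_def cinner_def inner_complex_def)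

lemma cadj_nth[simp]: "cadj A $ i $ j = cnj (A $ j $ i)"
  by (simp add: cadj_def)

lemma cinner_mat: "cinner x (A *v y) = cinner (cadj A *v x) y"
  unfolding cinner_def matrix_vector_mult_def
  by (simp add: sum_distrib_left sum_distrib_right mult_ac) (rule sum.swap)

lemma cadj_cadj[simp]: "cadj (cadj A) = A" by (simp add: vec_eq_iff)
lemma cadj_add: "cadj (A + B) = cadj A + cadj B" by (simp add: vec_eq_iff)
lemma cadj_diff: "cadj (A - B) = cadj A - cadj B" by (simp add: vec_eq_iff)
lemma cadj_uminus: "cadj (- A) = - cadj A" by (simp add: vec_eq_iff)
lemma cadj_scaleR: "cadj (c *\<^sub>R A) = c *\<^sub>R cadj A" by (simp add: vec_eq_iff)
lemma cadj_zero[simp]: "cadj 0 = 0" by (simp add: vec_eq_iff)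
lemma cadj_mat: "cadj (mat c) = mat (cnj c)" by (simp add: vec_eq_iff mat_def)
lemma cadj_sum: "cadj (sum f S) = (\<Sum>k\<in>S. cadj (f k))"
  by (induct S rule: infinite_finite_induct) (auto simp: cadj_add)
lemma cadj_mult: "cadj (A ** B) = cadj B ** cadj A"
  by (simp add: vec_eq_iff matrix_matrix_mult_def mult.commute)

lemma matrix_sum_ldistrib: "(A::'a::semiring_1^'n::finite^'m::finite) ** sum f S = (\<Sum>k\<in>S. A ** f k)"
  by (induct S rule: infinite_finite_induct) (auto simp: matrix_add_ldistrib)
lemma matrix_add_rdistrib': "((B::'a::semiring_1^'n::finite^'m::finite) + C) ** A = B ** A + C ** A"
  by (vector matrix_matrix_mult_def sum.distrib[symmetric] field_simps)
lemma matrix_sum_rdistrib: "sum f S ** (A::'a::semiring_1^'n::finite^'m::finite) = (\<Sum>k\<in>S. f k ** A)"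
  by (induct S rule: infinite_finite_induct) (auto simp: matrix_add_rdistrib')
lemma matrix_diff_ldistrib: "(A::'a::ring_1^'n::finite^'m::finite) ** (B - C) = A ** B - A ** C"
  by (vector matrix_matrix_mult_def sum_subtractf[symmetric] field_simps)
lemma matrix_diff_rdistrib: "((B::'a::ring_1^'n::finite^'m::finite) - C) ** A = B ** A - C ** A"
  by (vector matrix_matrix_mult_def sum_subtractf[symmetric] field_simps)
lemma matrix_uminus_left: "(- B::'a::ring_1^'n::finite^'m::finite) ** A = - (B ** A)"
  by (vector matrix_matrix_mult_def sum_negf[symmetric])
lemma matrix_uminus_right: "(A::'a::ring_1^'n::finite^'m::finite) ** (- B) = - (A ** B)"
  by (vector matrix_matrix_mult_def sum_negf[symmetric])

lemma mat_mult_left: "mat c ** (A::'a::semiring_1^'n::finite^'n) = map_matrix ((*) c) A"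
  unfolding matrix_matrix_mult_def mat_def
  by (auto simp: vec_eq_iff if_distrib if_distribR sum.delta'[OF finite] cong: if_cong)
lemma mat_mult_right: "(A::'a::comm_semiring_1^'n::finite^'n) ** mat c = map_matrix ((*) c) A"
  unfolding matrix_matrix_mult_def mat_def
  by (auto simp: vec_eq_iff if_distrib if_distribR sum.delta'[OF finite] mult.commute cong: if_cong)
lemma mat_comm: "mat c ** (A::'a::comm_semiring_1^'n::finite^'n) = A ** mat c"
  by (simp add: mat_mult_left mat_mult_right)

lemma trace_sum: "trace (sum f S) = (\<Sum>k\<in>S. trace (f k :: 'a::comm_semiring_1^'n::finite^'n))"
  by (induct S rule: infinite_finite_induct) (auto simp: trace_add trace_0[simplified])
lemma trace_uminus: "trace (- (A::'a::comm_ring_1^'n::finite^'n)) = - trace A"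
  by (simp add: trace_def sum_negf)
lemma trace_scaleR: "trace (c *\<^sub>R (A::complex^'n::finite^'n)) = c *\<^sub>R trace A"
  by (simp add: trace_def scaleR_sum_right)
lemma trace_map_mult: "trace (map_matrix ((*) c) (A::'a::comm_semiring_1^'n::finite^'n)) = c * trace A"
  by (simp add: trace_def sum_distrib_left)
lemma trace_cadj: "trace (cadj A) = cnj (trace A)"
  by (simp add: trace_def)
lemma trace_mat_mult: "trace (mat c ** (A::'a::comm_semiring_1^'n::finite^'n)) = c * trace A"
  by (simp add: mat_mult_left trace_map_mult)

lemma matrix_vector_add_right: "A *v (x + y) = A *v x + A *v (y::'a::semiring_1^'n::finite)"
  by (vector matrix_vector_mult_def sum.distrib[symmetric] field_simps)
lemma matrix_vector_add_left: "(A + B) *v (x::'a::semiring_1^'n::finite) = A *v x + B *v x"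
  by (vector matrix_vector_mult_def sum.distrib[symmetric] field_simps)
lemma matrix_vector_diff_right: "A *v (x - y) = A *v x - A *v (y::'a::ring_1^'n::finite)"
  by (vector matrix_vector_mult_def sum_subtractf[symmetric] field_simps)
lemma matrix_vector_diff_left: "(A - B) *v (x::'a::ring_1^'n::finite) = A *v x - B *v x"
  by (vector matrix_vector_mult_def sum_subtractf[symmetric] field_simps)
lemma matrix_vector_scale_right: "A *v (c *s x) = c *s (A *v (x::'a::comm_semiring_1^'n::finite))"
  by (vector matrix_vector_mult_def sum_distrib_left mult_ac)
lemma matrix_vector_scaleR_left: "(c *\<^sub>R A) *v (x::complex^'n::finite) = c *\<^sub>R (A *v x)"
  by (vector matrix_vector_mult_def scaleR_sum_right)
lemma matrix_vector_sum_left: "(sum f S) *v (x::'a::semiring_1^'n::finite) = (\<Sum>k\<in>S. f k *v x)"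
  by (induct S rule: infinite_finite_induct) (auto simp: matrix_vector_add_left)
lemma mat_vector: "mat c *v (x::'a::semiring_1^'n::finite) = c *s x"
  unfolding matrix_vector_mult_def mat_def
  by (auto simp: vec_eq_iff if_distrib if_distribR sum.delta'[OF finite] cong: if_cong)

lemma qf_add: "qf (A + B) v = qf A v + qf B v"
  by (simp add: qf_def matrix_vector_add_left cinner_add_right)
lemma qf_diff: "qf (A - B) v = qf A v - qf B v"
  by (simp add: qf_def matrix_vector_diff_left cinner_diff_right)
lemma qf_scaleR: "qf (c *\<^sub>R A) v = c *\<^sub>R qf A v"
  by (simp add: qf_def matrix_vector_scaleR_left cinner_def scaleR_sum_right)
lemma qf_zero[simp]: "qf 0 v = 0" by (simp add: qf_def)
lemma qf_sum: "qf (sum f S) v = (\<Sum>k\<in>S. qf (f k) v)"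
  by (induct S rule: infinite_finite_induct) (auto simp: qf_add)
lemma qf_mat: "qf (mat c) v = c * complex_of_real ((norm v)^2)"
  by (simp add: qf_def mat_vector cinner_scale_right cinner_self)
lemma qf_mult: "qf (A ** B) v = cinner (cadj A *v v) (B *v v)"
  by (simp add: qf_def cinner_mat matrix_vector_mul_assoc[symmetric])
lemma qf_scale_vec: "qf A (c *s v) = complex_of_real ((cmod c)^2) * qf A v"
  by (simp add: qf_def matrix_vector_scale_right cinner_scale_right cinner_scale_left complex_norm_square[symmetric] mult_ac)

lemma hermitian_qf_real: "hermitian A \<Longrightarrow> Im (qf A v) = 0"
proof -
  assume "hermitian A"
  then have "cnj (qf A v) = qf A v"
    by (simp add: qf_def cinner_cnj cinner_mat hermitian_def)
  then show ?thesis by (metis Reals_cnj_iff complex_is_Real_iff)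
qed


lemma hermitian_cinner: "hermitian A \<Longrightarrow> cinner x (A *v y) = cinner (A *v x) y"
  by (simp add: cinner_mat hermitian_def)

lemma qf_expand:
  "qf A (v - c *s w) = qf A v - c * cinner v (A *v w) - cnj c * cinner w (A *v v) + cnj c * c * qf A w"
  by (simp add: qf_def matrix_vector_diff_right matrix_vector_scale_right cinner_diff_left
      cinner_diff_right cinner_scale_left cinner_scale_right algebra_simps)

lemma norm_sq_pos: "v \<noteq> 0 \<Longrightarrow> 0 < (norm (v::'a::real_normed_vector))^2" by simp

lemma psd_kernel:
  assumes P: "psd A" and z: "Re (qf A v) = 0"
  shows "A *v v = 0"
proof -
  let ?w = "A *v v"
  have herm: "hermitian A" and nn: "\<And>x. 0 \<le> Re (qf A x)" using P by (auto simp: psd_qf)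
  have c1: "cinner v (A *v ?w) = cinner ?w ?w" using hermitian_cinner[OF herm] by simp
  define R where "R = Re (qf A ?w)"
  define N where "N = (norm ?w)^2"
  have key: "0 \<le> - 2 * s * N + s * s * R" for s :: real
  proof -
    have "qf A (v - complex_of_real s *s ?w) = qf A v - complex_of_real s * cinner ?w ?w
        - complex_of_real s * cinner ?w ?w + complex_of_real s * complex_of_real s * qf A ?w"
      unfolding qf_expand c1 by simp
    then have "Re (qf A (v - complex_of_real s *s ?w)) = - 2 * s * N + s * s * R"
      using z by (simp add: cinner_self N_def R_def)
    then show ?thesis using nn by metis
  qed
  have N0: "0 \<le> N" by (simp add: N_def)
  have R0: "0 \<le> R" using nn by (simp add: R_def)
  have "N = 0"
  proof (rule ccontr)
    assume "N \<noteq> 0" then have Np: "N > 0" using N0 by simp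
    define s where "s = N / (R + 1)"
    have sp: "s > 0" using Np R0 by (simp add: s_def)
    have "0 \<le> s * (- 2 * N + s * R)" using key[of s] by (simp add: algebra_simps)
    then have "2 * N \<le> s * R" using sp by (simp add: zero_le_mult_iff)
    moreover have "s * R < N" using Np R0 by (simp add: s_def field_simps)
    ultimately show False using Np by simp
  qed
  then show ?thesis by (simp add: N_def)
qed

definition outer :: "complex^'n::finite \<Rightarrow> 'n cmat" where
  "outer u = (\<chi> i j. u$i * cnj (u$j))"

lemma qf_outer: "qf (outer u) v = complex_of_real ((cmod (cinner u v))^2)"
proof -
  have "qf (outer u) v = cinner v u * cinner u v"
    by (simp add: qf_def outer_def cinner_def matrix_vector_mult_def sum_distrib_left sum_distrib_right mult_ac) (rule sum.swap)
  also have "\<dots> = cnj (cinner u v) * cinner u v" by (simp add: cinner_cnj)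
  finally show ?thesis using complex_norm_square by (metis mult.commute)
qed

lemma outer_zero[simp]: "outer 0 = 0" by (simp add: outer_def vec_eq_iff)

lemma cadj_outer: "cadj (outer u) = outer u" by (simp add: vec_eq_iff outer_def)

lemma trace_outer: "trace (P ** outer u) = qf P u"
  by (simp add: trace_def matrix_matrix_mult_def outer_def qf_def cinner_def matrix_vector_mult_def
      sum_distrib_left mult_ac)

lemma psd_herm_entry: "hermitian A \<Longrightarrow> cnj (A$i$j) = A$j$i"
  by (metis cadj_nth hermitian_def)

lemma qf_axis: "qf A (axis a 1) = A$a$a"
  by (simp add: qf_def cinner_def matrix_vector_mult_def axis_def if_distrib if_distribR sum.delta' cong: if_cong)

lemma psd_decomp_aux:
  assumes "finite S"
  shows "psd A \<Longrightarrow> (\<forall>i. i \<notin> S \<longrightarrow> (\<forall>j. A$i$j = 0)) \<Longrightarrow> \<exists>U. A = (\<Sum>k\<in>S. outer (U k))"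
  using assms
proof (induction S arbitrary: A rule: finite_induct)
  case empty
  then show ?case by (auto simp: vec_eq_iff)
next
  case (insert a S A)
  have herm: "hermitian A" and nn: "\<And>x. 0 \<le> Re (qf A x)" using insert.prems by (auto simp: psd_qf)
  define r where "r = Re (A$a$a)"
  have Ar: "A$a$a = complex_of_real r"
    using hermitian_qf_real[OF herm, of "axis a 1"] by (simp add: qf_axis r_def complex_eq_iff)
  have r0: "0 \<le> r" using nn[of "axis a 1"] by (simp add: qf_axis r_def)
  show ?case
  proof (cases "r = 0")
    case True
    have "A *v axis a 1 = 0" by (rule psd_kernel[OF insert.prems(1)]) (simp add: qf_axis r_def[symmetric] True)
    then have col: "A$i$a = 0" for i
      by (simp add: vec_eq_iff matrix_vector_mult_def axis_def if_distrib if_distribR sum.delta' cong: if_cong)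
    have row: "A$a$j = 0" for j using psd_herm_entry[OF herm, of j a] col[of j] by simp
    have "\<forall>i. i \<notin> S \<longrightarrow> (\<forall>j. A$i$j = 0)" using insert.prems(2) row by (metis insert_iff)
    with insert.IH[OF insert.prems(1)] obtain U where U: "A = (\<Sum>k\<in>S. outer (U k))" by blast
    have "A = (\<Sum>k\<in>insert a S. outer ((U(a:=0)) k))"
    proof -
      have "(\<Sum>k\<in>S. outer ((U(a:=0)) k)) = (\<Sum>k\<in>S. outer (U k))"
        by (rule sum.cong) (use insert.hyps in auto)
      then show ?thesis using insert.hyps U by simp
    qed
    then show ?thesis by blast
  next
    case False
    then have rp: "r > 0" using r0 by simp
    define w where "w = A *v axis a 1"
    have wi: "w$i = A$i$a" for i
      by (simp add: w_def matrix_vector_mult_def axis_def if_distrib if_distribR sum.delta' cong: if_cong)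
    define u where "u = complex_of_real (1 / sqrt r) *s w"
    define A' where "A' = A - outer u"
    have outer_u: "outer u $ i $ j = A$i$a * A$a$j / complex_of_real r" for i j
      using psd_herm_entry[OF herm, of j a] rp
    proof -
      have h: "cnj (A$j$a) = A$a$j" using psd_herm_entry[OF herm, of j a] .
      have s: "complex_of_real (1 / sqrt r) * complex_of_real (1 / sqrt r) = 1 / complex_of_real r"
        using rp by (simp add: of_real_mult[symmetric] del: of_real_mult)
      have "outer u $ i $ j = (complex_of_real (1 / sqrt r) * complex_of_real (1 / sqrt r)) * (A$i$a * cnj (A$j$a))"
        by (simp add: outer_def u_def wi mult_ac)
      then show ?thesis unfolding s h by simp
    qed
    have hA': "hermitian A'" using herm by (simp add: hermitian_def A'_def cadj_diff cadj_outer)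
    have nnA': "0 \<le> Re (qf A' v)" for v
    proof -
      define z where "z = cinner w v"
      define c where "c = z / complex_of_real r"
      have e1: "cinner v (A *v axis a 1) = cnj z"
        by (simp add: z_def w_def cinner_cnj)
      have e2: "cinner (axis a 1) (A *v v) = z"
        by (simp add: z_def w_def hermitian_cinner[OF herm])
      have "qf A (v - c *s axis a 1) = qf A v - c * cnj z - cnj c * z + cnj c * c * complex_of_real r"
        by (simp add: qf_expand e1 e2 qf_axis Ar)
      also have "\<dots> = qf A v - z * cnj z / complex_of_real r"
        using rp by (simp add: c_def field_simps)
      also have "\<dots> = qf A v - complex_of_real ((cmod z)^2 / r)"
        by (simp only: of_real_divide complex_norm_square)
      finally have 1: "0 \<le> Re (qf A v) - (cmod z)^2 / r" using nn[of "v - c *s axis a 1"] by simp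
      have "cinner u v = complex_of_real (1 / sqrt r) * z"
        by (simp add: u_def z_def cinner_scale_left)
      then have "(cmod (cinner u v))^2 = (cmod z)^2 / r"
        using rp by (simp add: norm_divide power_divide real_sqrt_pow2)
      then show ?thesis using 1 by (simp add: A'_def qf_diff qf_outer)
    qed
    have psdA': "psd A'" using hA' nnA' by (simp add: psd_qf)
    have zero': "\<forall>i. i \<notin> S \<longrightarrow> (\<forall>j. A'$i$j = 0)"
    proof (intro allI impI)
      fix i j assume "i \<notin> S"
      show "A'$i$j = 0"
      proof (cases "i = a")
        case True
        then show ?thesis using rp by (simp add: A'_def outer_u Ar)
      next
        case False
        then show ?thesis using insert.prems(2) \<open>i \<notin> S\<close> by (simp add: A'_def outer_u)
      qed
    qed
    obtain U where U: "A' = (\<Sum>k\<in>S. outer (U k))" using insert.IH[OF psdA' zero'] by blast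
    have "A = outer u + A'" by (simp add: A'_def)
    also have "\<dots> = (\<Sum>k\<in>insert a S. outer ((U(a:=u)) k))"
    proof -
      have "(\<Sum>k\<in>S. outer ((U(a:=u)) k)) = (\<Sum>k\<in>S. outer (U k))"
        by (rule sum.cong) (use insert.hyps in auto)
      then show ?thesis using insert.hyps U by simp
    qed
    finally show ?thesis by blast
  qed
qed

lemma psd_decomp: fixes A :: "'n::finite cmat" shows "psd A \<Longrightarrow> \<exists>U. A = (\<Sum>k\<in>(UNIV::'n set). outer (U k))"
  using psd_decomp_aux[of "UNIV::'n set" A] by simp

lemma trace_psd_nonneg:
  fixes P \<rho> :: "'n::finite cmat"
  assumes "psd P" "psd \<rho>"
  shows "0 \<le> Re (trace (P ** \<rho>))"
proof -
  obtain U :: "'n \<Rightarrow> complex^'n" where U: "\<rho> = (\<Sum>k\<in>UNIV. outer (U k))" using psd_decomp[OF assms(2)] by blast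
  have "trace (P ** \<rho>) = (\<Sum>k\<in>UNIV. qf P (U k))"
    unfolding U matrix_sum_ldistrib trace_sum trace_outer ..
  moreover have "\<And>k. 0 \<le> Re (qf P (U k))" using assms(1) by (simp add: psd_qf)
  ultimately show ?thesis by (simp add: sum_nonneg)
qed

lemma trace_herm_real:
  assumes "hermitian P" "hermitian \<rho>"
  shows "Im (trace (P ** \<rho>)) = 0"
proof -
  have "cnj (trace (P ** \<rho>)) = trace (P ** \<rho>)"
    using assms by (simp only: trace_cadj[symmetric] cadj_mult hermitian_def trace_mul_sym[of \<rho> P])
  then show ?thesis by (metis Reals_cnj_iff complex_is_Real_iff)
qed

lemma qf_bound: "cmod (qf A v) \<le> (\<Sum>i\<in>UNIV. \<Sum>j\<in>UNIV. cmod (A$i$j)) * (norm v)^2"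
proof -
  have "cmod (qf A v) = cmod (\<Sum>i\<in>UNIV. \<Sum>j\<in>UNIV. cnj (v$i) * A$i$j * v$j)"
    by (simp add: qf_def cinner_def matrix_vector_mult_def sum_distrib_left mult_ac)
  also have "\<dots> \<le> (\<Sum>i\<in>UNIV. \<Sum>j\<in>UNIV. cmod (cnj (v$i) * A$i$j * v$j))"
    by (rule order_trans[OF norm_sum sum_mono[OF order_trans[OF norm_sum]]]) auto
  also have "\<dots> \<le> (\<Sum>i\<in>UNIV. \<Sum>j\<in>UNIV. cmod (A$i$j) * (norm v)^2)"
  proof (intro sum_mono)
    fix i j
    have a: "cmod (v$i) \<le> norm v" "cmod (v$j) \<le> norm v" by (rule Finite_Cartesian_Product.norm_nth_le)+
    have "cmod (v$i) * cmod (v$j) \<le> norm v * norm v"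
      by (rule mult_mono[OF a]) auto
    then have "cmod (A$i$j) * (cmod (v$i) * cmod (v$j)) \<le> cmod (A$i$j) * (norm v * norm v)"
      by (rule mult_left_mono) auto
    then show "cmod (cnj (v$i) * A$i$j * v$j) \<le> cmod (A$i$j) * (norm v)^2"
      by (simp add: norm_mult power2_eq_square mult_ac)
  qed
  also have "\<dots> = (\<Sum>i\<in>UNIV. \<Sum>j\<in>UNIV. cmod (A$i$j)) * (norm v)^2"
    by (simp add: sum_distrib_right)
  finally show ?thesis .
qed


lemma hermitian_const: "hermitian (const d)"
  by (simp add: hermitian_def const_def cadj_mat)

lemma qf_const: "qf (const d) v = complex_of_real (d * (norm v)^2)"
  by (simp add: const_def qf_mat)

lemma continuous_qf: "continuous_on S (\<lambda>v. Re (qf A v))"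
  unfolding qf_def cinner_def matrix_vector_mult_def
  by (intro continuous_intros)

lemma qf_real_scale: "qf A (complex_of_real t *s v) = complex_of_real (t^2) * qf A v"
  by (simp add: qf_scale_vec)

lemma ofreal_scale: "complex_of_real t *s (v::complex^'n::finite) = t *\<^sub>R v"
  by (simp add: vec_eq_iff del: scaleR_conv_of_real) (simp add: scaleR_conv_of_real)

lemma rayleigh:
  fixes X :: "'n::finite cmat"
  assumes herm: "hermitian X"
  shows "\<exists>m u. u \<noteq> 0 \<and> (\<forall>v. m * (norm v)^2 \<le> Re (qf X v)) \<and> X *v u = complex_of_real m *s u"
proof -
  let ?S = "sphere (0::complex^'n) 1"
  obtain i :: 'n where True by blast
  have "cinner (axis i (1::complex)) (axis i 1) = 1"
    by (simp add: cinner_def axis_def if_distrib if_distribR sum.delta' cong: if_cong)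
  then have "(norm (axis i (1::complex)))^2 = 1" using cinner_self[of "axis i (1::complex)"]
    by (metis of_real_eq_1_iff)
  then have "norm (axis i (1::complex)) = 1" by (simp add: power2_eq_1_iff)
  then have ne: "?S \<noteq> {}" by (metis mem_sphere_0 empty_iff)
  obtain u where uS: "u \<in> ?S" and umin: "\<forall>y\<in>?S. Re (qf X u) \<le> Re (qf X y)"
    using continuous_attains_inf[OF compact_sphere ne continuous_qf] by blast
  define m where "m = Re (qf X u)"
  have nu: "norm u = 1" using uS by (simp add: dist_norm)
  have bound: "m * (norm v)^2 \<le> Re (qf X v)" for v
  proof (cases "v = 0")
    case True then show ?thesis by (simp add: qf_def)
  next
    case False
    define u' where "u' = (1 / norm v) *\<^sub>R v"
    have "norm u' = 1" using False by (simp add: u'_def)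
    then have "m \<le> Re (qf X u')" using umin by (simp add: m_def dist_norm)
    also have "qf X u' = complex_of_real ((1 / norm v)^2) * qf X v" unfolding u'_def ofreal_scale[symmetric] by (rule qf_real_scale)
    finally have "m \<le> (1 / norm v)^2 * Re (qf X v)" by simp
    then show ?thesis using False by (simp add: field_simps)
  qed
  have psdY: "psd (X - const m)"
    using herm bound by (simp add: psd_qf hermitian_def cadj_diff hermitian_const[unfolded hermitian_def] qf_diff qf_const)
  have "Re (qf (X - const m) u) = 0" using nu by (simp add: qf_diff qf_const m_def)
  then have "(X - const m) *v u = 0" by (rule psd_kernel[OF psdY])
  then have "X *v u = complex_of_real m *s u"
    by (simp add: matrix_vector_diff_left const_def mat_vector)
  moreover have "u \<noteq> 0" using nu by auto
  ultimately show ?thesis using bound by blast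
qed

lemma eig_qf:
  assumes "X *v v = \<mu> *s v"
  shows "qf X v = \<mu> * complex_of_real ((norm v)^2)"
  using assms by (simp add: qf_def cinner_scale_right cinner_self)

lemma eig_real:
  assumes herm: "hermitian X" and "X *v v = \<mu> *s v" "v \<noteq> 0"
  shows "Im \<mu> = 0"
proof -
  have "Im (qf X v) = 0" by (rule hermitian_qf_real[OF herm])
  then have "Im \<mu> * (norm v)^2 = 0" using eig_qf[OF assms(2)] by simp
  then show ?thesis using assms(3) by simp
qed

lemma eig_finite:
  fixes X :: "'n::finite cmat"
  assumes herm: "hermitian X"
  shows "finite (eigenvalues X)"
proof -
  define g where "g \<mu> = (SOME v. v \<noteq> 0 \<and> X *v v = \<mu> *s v)" for \<mu>
  have g: "g \<mu> \<noteq> 0 \<and> X *v g \<mu> = \<mu> *s g \<mu>" if "\<mu> \<in> eigenvalues X" for \<mu>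
  proof -
    from that obtain v where "v \<noteq> 0 \<and> X *v v = \<mu> *s v" by (auto simp: eigenvalues_def)
    then show ?thesis unfolding g_def by (rule someI)
  qed
  have inj: "inj_on g (eigenvalues X)"
  proof (rule inj_onI)
    fix a b assume a: "a \<in> eigenvalues X" and b: "b \<in> eigenvalues X" and e: "g a = g b"
    have "a *s g a = b *s g a" using g[OF a] g[OF b] e by metis
    then show "a = b" using g[OF a] vector_mul_rcancel by blast
  qed
  have orth: "pairwise orthogonal (g ` eigenvalues X)"
  proof (clarsimp simp: pairwise_def)
    fix a b assume a: "a \<in> eigenvalues X" and b: "b \<in> eigenvalues X" and ne: "g a \<noteq> g b"
    then have ab: "a \<noteq> b" by auto
    have ra: "Im a = 0" using eig_real[OF herm] g[OF a] by blast
    have "cinner (g a) (X *v g b) = b * cinner (g a) (g b)"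
      using g[OF b] by (simp add: cinner_scale_right)
    moreover have "cinner (g a) (X *v g b) = cnj a * cinner (g a) (g b)"
    proof -
      have "cinner (g a) (X *v g b) = cinner (X *v g a) (g b)" by (rule hermitian_cinner[OF herm])
      also have "\<dots> = cinner (a *s g a) (g b)" using g[OF a] by simp
      finally show ?thesis by (simp add: cinner_scale_left)
    qed
    moreover have "cnj a = a" using ra by (simp add: complex_eq_iff)
    ultimately have "(b - a) * cinner (g a) (g b) = 0" by (simp add: left_diff_distrib) (metis)
    then have "cinner (g a) (g b) = 0" using ab by simp
    then show "orthogonal (g a) (g b)" by (simp add: orthogonal_def inner_cinner)
  qed
  have "0 \<notin> g ` eigenvalues X" using g by auto
  then have "independent (g ` eigenvalues X)" using pairwise_orthogonal_independent[OF orth] by blast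
  then have "finite (g ` eigenvalues X)" using independent_bound by blast
  then show ?thesis using finite_imageD[OF _ inj] by blast
qed

lemma min_eig_props:
  fixes X :: "'n::finite cmat"
  assumes herm: "hermitian X"
  shows "(\<forall>v. min_eig X * (norm v)^2 \<le> Re (qf X v)) \<and> psd (X - const (min_eig X))
     \<and> (\<exists>u. u \<noteq> 0 \<and> X *v u = complex_of_real (min_eig X) *s u)"
proof -
  obtain m u where u0: "u \<noteq> 0" and bound: "\<forall>v. m * (norm v)^2 \<le> Re (qf X v)"
    and eu: "X *v u = complex_of_real m *s u"
    using rayleigh[OF herm] by blast
  have mem: "complex_of_real m \<in> eigenvalues X" using u0 eu by (auto simp: eigenvalues_def)
  have low: "m \<le> y" if hy: "y \<in> Re ` eigenvalues X" for y
  proof -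
    obtain \<mu> where mu: "\<mu> \<in> eigenvalues X" and y: "y = Re \<mu>" using hy by blast
    obtain v where v: "v \<noteq> 0" "X *v v = \<mu> *s v" using mu by (auto simp: eigenvalues_def)
    have "Re (qf X v) = Re \<mu> * (norm v)^2" using eig_qf[OF v(2)] by simp
    then have "m * (norm v)^2 \<le> Re \<mu> * (norm v)^2" using bound by metis
    then show ?thesis using v(1) y by simp
  qed
  have "min_eig X = m"
    unfolding min_eig_def
  proof (rule Min_eqI)
    show "finite (Re ` eigenvalues X)" using eig_finite[OF herm] by simp
    show "m \<in> Re ` eigenvalues X" using mem by (metis Re_complex_of_real image_eqI)
  qed (rule low)
  moreover have "psd (X - const m)"
  proof -
    have "hermitian (X - const m)" using herm hermitian_const[of m]
      by (simp add: hermitian_def cadj_diff)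
    moreover have "0 \<le> Re (qf (X - const m) v)" for v
      using bound by (simp add: qf_diff qf_const)
    ultimately show ?thesis by (simp add: psd_qf)
  qed
  ultimately show ?thesis using bound u0 eu by auto
qed

lemma min_eig_ge:
  fixes X :: "'n::finite cmat"
  assumes herm: "hermitian X" and b: "\<forall>v. d * (norm v)^2 \<le> Re (qf X v)"
  shows "d \<le> min_eig X"
proof -
  obtain u where u: "u \<noteq> 0" "X *v u = complex_of_real (min_eig X) *s u"
    using min_eig_props[OF herm] by blast
  have "Re (qf X u) = min_eig X * (norm u)^2" using eig_qf[OF u(2)] by simp
  then have "d * (norm u)^2 \<le> min_eig X * (norm u)^2" using b by metis
  then show ?thesis using u(1) by simp
qed


lemma matrix_scaleR_left: "(k *\<^sub>R A) ** (B::complex^'n::finite^'n) = k *\<^sub>R (A ** B)"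
  by (simp add: scalar_matrix_assoc)
lemma matrix_scaleR_right: "(A::complex^'n::finite^'n) ** (k *\<^sub>R B) = k *\<^sub>R (A ** B)"
  by (simp add: matrix_scalar_ac scalar_matrix_assoc)
lemma matrix_mat_right: "(A::complex^'n::finite^'n) ** mat c = mat c ** A"
  by (simp add: mat_comm)

lemmas mexp = matrix_add_ldistrib matrix_add_rdistrib' matrix_diff_ldistrib matrix_diff_rdistrib
  matrix_uminus_left matrix_uminus_right matrix_scaleR_left matrix_scaleR_right
  matrix_sum_ldistrib matrix_sum_rdistrib matrix_mul_assoc

lemmas texp = trace_add trace_sub trace_uminus trace_scaleR trace_sum

lemma trace_t1: "trace (X ** (L ** \<rho> ** cadj L)) = trace ((cadj L ** X ** L) ** (\<rho>::'n::finite cmat))"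
proof -
  have "trace (X ** (L ** \<rho> ** cadj L)) = trace ((X ** L ** \<rho>) ** cadj L)" by (simp add: matrix_mul_assoc)
  also have "\<dots> = trace (cadj L ** (X ** L ** \<rho>))" by (rule trace_mul_sym)
  also have "\<dots> = trace ((cadj L ** X ** L) ** \<rho>)" by (simp add: matrix_mul_assoc)
  finally show ?thesis .
qed

lemma trace_t3: "trace (X ** (\<rho> ** cadj L ** L)) = trace ((cadj L ** L ** X) ** (\<rho>::'n::finite cmat))"
proof -
  have "trace (X ** (\<rho> ** cadj L ** L)) = trace ((X ** \<rho> ** cadj L) ** L)" by (simp add: matrix_mul_assoc)
  also have "\<dots> = trace (L ** (X ** \<rho> ** cadj L))" by (rule trace_mul_sym)
  also have "\<dots> = trace ((L ** X ** \<rho>) ** cadj L)" by (simp add: matrix_mul_assoc)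
  also have "\<dots> = trace (cadj L ** (L ** X ** \<rho>))" by (rule trace_mul_sym)
  also have "\<dots> = trace ((cadj L ** L ** X) ** \<rho>)" by (simp add: matrix_mul_assoc)
  finally show ?thesis .
qed

lemma trace_t4: "trace (X ** (\<rho> ** H)) = trace ((H ** X) ** (\<rho>::'n::finite cmat))"
proof -
  have "trace (X ** (\<rho> ** H)) = trace ((X ** \<rho>) ** H)" by (simp add: matrix_mul_assoc)
  also have "\<dots> = trace (H ** (X ** \<rho>))" by (rule trace_mul_sym)
  also have "\<dots> = trace ((H ** X) ** \<rho>)" by (simp add: matrix_mul_assoc)
  finally show ?thesis .
qed

lemma trace_heis:
  fixes X \<rho> H :: "'n::finite cmat"
  shows "trace (X ** lindblad H L I \<rho>) = trace (gen H L I X ** \<rho>)"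
proof -
  have a: "trace (X ** (L ** \<rho> ** cadj L - (1/2::real) *\<^sub>R (cadj L ** L ** \<rho>) - (1/2::real) *\<^sub>R (\<rho> ** cadj L ** L)))
      = trace (genL L X ** \<rho>)" for L
  proof -
    have "trace (X ** (L ** \<rho> ** cadj L - (1/2::real) *\<^sub>R (cadj L ** L ** \<rho>) - (1/2::real) *\<^sub>R (\<rho> ** cadj L ** L)))
      = trace (X ** (L ** \<rho> ** cadj L)) - (1/2::real) *\<^sub>R trace (X ** (cadj L ** L ** \<rho>))
        - (1/2::real) *\<^sub>R trace (X ** (\<rho> ** cadj L ** L))"
      by (simp only: matrix_diff_ldistrib matrix_scaleR_right trace_sub trace_scaleR)
    also have "\<dots> = trace ((cadj L ** X ** L) ** \<rho>) - (1/2::real) *\<^sub>R trace ((X ** cadj L ** L) ** \<rho>)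
        - (1/2::real) *\<^sub>R trace ((cadj L ** L ** X) ** \<rho>)"
      by (simp only: trace_t1 trace_t3) (simp add: matrix_mul_assoc)
    also have "\<dots> = trace (genL L X ** \<rho>)"
      by (simp only: genL_def matrix_diff_rdistrib matrix_scaleR_left trace_sub trace_scaleR) simp
    finally show ?thesis .
  qed
  have b: "trace (X ** (- (mat \<i> ** comm H \<rho>))) = trace ((mat \<i> ** comm H X) ** \<rho>)"
  proof -
    have "trace (X ** (- (mat \<i> ** comm H \<rho>))) = - (\<i> * (trace (X ** (H ** \<rho>)) - trace (X ** (\<rho> ** H))))"
      by (simp only: comm_def matrix_uminus_right trace_uminus matrix_mul_assoc matrix_mat_right
          matrix_diff_ldistrib trace_sub)
        (simp add: matrix_mul_assoc[symmetric] trace_mat_mult right_diff_distrib)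
    also have "\<dots> = \<i> * (trace ((H ** X) ** \<rho>) - trace ((X ** H) ** \<rho>))"
      by (simp only: trace_t4[of X \<rho> H]) (simp add: matrix_mul_assoc algebra_simps)
    also have "\<dots> = trace ((mat \<i> ** comm H X) ** \<rho>)"
      by (simp add: comm_def matrix_mul_assoc[symmetric] trace_mat_mult matrix_diff_rdistrib trace_sub right_diff_distrib)
    finally show ?thesis .
  qed
  show ?thesis
    unfolding lindblad_def gen_def matrix_add_ldistrib matrix_add_rdistrib' trace_add
      matrix_sum_ldistrib matrix_sum_rdistrib trace_sum
    using a b by simp
qed


lemma scaleR2_cancel: "(2::real) *\<^sub>R A = (2::real) *\<^sub>R B \<Longrightarrow> A = (B::'a::real_vector)"
  by simp

lemma genL_add: "genL L (X + Y) = genL L X + genL L (Y::'n::finite cmat)"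
  by (simp add: genL_def mexp algebra_simps)
lemma genL_diff: "genL L (X - Y) = genL L X - genL L (Y::'n::finite cmat)"
  by (simp add: genL_def mexp algebra_simps)
lemma genL_scaleR: "genL L (c *\<^sub>R X) = c *\<^sub>R genL L (X::'n::finite cmat)"
  by (simp add: genL_def mexp algebra_simps)
lemma comm_add_right: "comm A (X + Y) = comm A X + comm A (Y::'n::finite cmat)"
  by (simp add: comm_def mexp algebra_simps)
lemma comm_add_left: "comm (X + Y) A = comm X A + comm Y (A::'n::finite cmat)"
  by (simp add: comm_def mexp algebra_simps)
lemma comm_diff_right: "comm A (X - Y) = comm A X - comm A (Y::'n::finite cmat)"
  by (simp add: comm_def mexp algebra_simps)
lemma comm_diff_left: "comm (X - Y) A = comm X A - comm Y (A::'n::finite cmat)"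
  by (simp add: comm_def mexp algebra_simps)
lemma comm_scaleR_right: "comm A (c *\<^sub>R X) = c *\<^sub>R comm A (X::'n::finite cmat)"
  by (simp add: comm_def mexp algebra_simps)
lemma comm_const_right: "comm A (const d :: 'n::finite cmat) = 0"
  by (simp add: comm_def const_def matrix_mat_right)
lemma comm_const_left: "comm (const d :: 'n::finite cmat) A = 0"
  by (simp add: comm_def const_def matrix_mat_right)

lemma gen_add: "gen H L I (X + Y) = gen H L I X + gen H L I (Y::'n::finite cmat)"
  by (simp add: gen_def genL_add comm_add_right matrix_add_ldistrib sum.distrib algebra_simps)
lemma gen_diff: "gen H L I (X - Y) = gen H L I X - gen H L I (Y::'n::finite cmat)"
  by (simp add: gen_def genL_diff comm_diff_right matrix_diff_ldistrib sum_subtractf algebra_simps)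

lemma genL_const: "genL L (const d :: 'n::finite cmat) = 0"
proof -
  have h: "\<And>Y::'n cmat. Y - (1/2::real) *\<^sub>R Y - (1/2::real) *\<^sub>R Y = 0"
    by (simp add: algebra_simps scaleR_add_left[symmetric])
  show ?thesis unfolding genL_def const_def
    by (simp add: mexp matrix_mat_right h)
qed

lemma gen_const: "gen H L I (const d :: 'n::finite cmat) = 0"
  by (simp add: gen_def comm_const_right genL_const)

lemma gen_split:
  assumes "M \<le> K"
  shows "gen H L {1..K} X = gen H L {1..M} X + (\<Sum>k\<in>{M+1..K}. genL (L k) X)"
proof -
  have u: "{1..K} = {1..M} \<union> {M+1..K}" using assms by auto
  have "(\<Sum>k\<in>{1..K}. genL (L k) X) = (\<Sum>k\<in>{1..M}. genL (L k) X) + (\<Sum>k\<in>{M+1..K}. genL (L k) X)"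
    unfolding u by (rule sum.union_disjoint) auto
  then show ?thesis by (simp add: gen_def algebra_simps)
qed

lemma diss_genL: "genL L (X ** X) - genL L X ** X - X ** genL L X = comm (cadj L) X ** comm X (L::'n::finite cmat)"
  apply (rule scaleR2_cancel)
  apply (simp add: genL_def comm_def mexp scaleR_right_diff_distrib)
  apply (simp add: scaleR_2 algebra_simps)
  done

lemma diss_H: "mat \<i> ** comm H (X ** X) - (mat \<i> ** comm H X) ** X - X ** (mat \<i> ** comm H X) = (0::'n::finite cmat)"
  by (simp add: comm_def mexp matrix_mat_right algebra_simps)

lemma diss_herm:
  assumes "cadj X = X"
  shows "diss H L I X = (\<Sum>k\<in>I. comm (cadj (L k)) X ** comm X (L k))"
proof -
  have "diss H L I X = (mat \<i> ** comm H (X ** X) - (mat \<i> ** comm H X) ** X - X ** (mat \<i> ** comm H X))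
     + (\<Sum>k\<in>I. genL (L k) (X ** X) - genL (L k) X ** X - X ** genL (L k) X)"
    unfolding diss_def gen_def assms
    by (simp add: matrix_add_rdistrib' matrix_add_ldistrib matrix_sum_rdistrib matrix_sum_ldistrib
        sum_subtractf sum.distrib algebra_simps)
  then show ?thesis by (simp add: diss_H diss_genL)
qed


definition ltm :: "'n::finite cmat \<Rightarrow> 'n cmat \<Rightarrow> 'n cmat" where
  "ltm L \<rho> = L ** \<rho> ** cadj L - (1/2::real) *\<^sub>R (cadj L ** L ** \<rho>) - (1/2::real) *\<^sub>R (\<rho> ** cadj L ** L)"

lemma lindblad_ltm: "lindblad H L I \<rho> = - (mat \<i> ** comm H \<rho>) + (\<Sum>k\<in>I. ltm (L k) \<rho>)"
  by (simp add: lindblad_def ltm_def)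

lemma ltm_add: "ltm L (X + Y) = ltm L X + ltm L (Y::'n::finite cmat)"
  by (simp add: ltm_def mexp algebra_simps)
lemma ltm_diff: "ltm L (X - Y) = ltm L X - ltm L (Y::'n::finite cmat)"
  by (simp add: ltm_def mexp algebra_simps)
lemma ltm_scaleR: "ltm L (c *\<^sub>R X) = c *\<^sub>R ltm L (X::'n::finite cmat)"
  by (simp add: ltm_def mexp algebra_simps)

lemma lindblad_add: "lindblad H L I (X + Y) = lindblad H L I X + lindblad H L I (Y::'n::finite cmat)"
  by (simp add: lindblad_ltm ltm_add comm_add_right matrix_add_ldistrib sum.distrib algebra_simps)
lemma lindblad_scaleR: "lindblad H L I (c *\<^sub>R X) = c *\<^sub>R lindblad H L I (X::'n::finite cmat)"
  by (simp add: lindblad_ltm ltm_scaleR comm_scaleR_right matrix_scaleR_right scaleR_sum_right algebra_simps)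
lemma lindblad_diff: "lindblad H L I (X - Y) = lindblad H L I X - lindblad H L I (Y::'n::finite cmat)"
  by (simp add: lindblad_ltm ltm_diff comm_diff_right matrix_diff_ldistrib sum_subtractf algebra_simps)
lemma linear_lindblad: "linear (lindblad H L I :: 'n::finite cmat \<Rightarrow> 'n cmat)"
  by (rule linearI) (simp_all add: lindblad_add lindblad_scaleR)
lemma bounded_linear_lindblad: "bounded_linear (lindblad H L I :: 'n::finite cmat \<Rightarrow> 'n cmat)"
  using linear_lindblad linear_conv_bounded_linear by blast

lemma cadj_mat_i: "cadj (mat \<i> ** Y) = - (mat \<i> ** cadj (Y::'n::finite cmat))"
  by (simp add: cadj_mult cadj_mat mat_mult_left mat_mult_right vec_eq_iff)

lemma lindblad_cadj:
  assumes "hermitian H"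
  shows "cadj (lindblad H L I X) = lindblad H L I (cadj (X::'n::finite cmat))"
proof -
  have hH: "cadj H = H" using assms by (simp add: hermitian_def)
  have c: "cadj (comm H X) = - comm H (cadj X)"
    by (simp add: comm_def cadj_diff cadj_mult hH)
  have cH: "cadj (mat \<i> ** comm H X) = mat \<i> ** comm H (cadj X)"
    by (simp only: cadj_mat_i c matrix_uminus_right minus_minus)
  have lt: "cadj (ltm M X) = ltm M (cadj X)" for M
  proof -
    have "cadj (ltm M X) = M ** cadj X ** cadj M - (1/2::real) *\<^sub>R (cadj X ** cadj M ** M)
        - (1/2::real) *\<^sub>R (cadj M ** M ** cadj X)"
      by (simp add: ltm_def cadj_diff cadj_scaleR cadj_mult matrix_mul_assoc)
    then show ?thesis by (simp add: ltm_def diff_diff_eq add.commute)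
  qed
  show ?thesis
    by (simp add: lindblad_ltm cadj_add cadj_diff cadj_uminus cadj_sum cH lt)
qed

lemma bounded_linear_cadj: "bounded_linear (cadj :: 'n::finite cmat \<Rightarrow> 'n cmat)"
proof -
  have "linear (cadj :: 'n::finite cmat \<Rightarrow> 'n cmat)"
    by (rule linearI) (simp_all add: cadj_add cadj_scaleR)
  then show ?thesis using linear_conv_bounded_linear by blast
qed

lemma bounded_linear_trace: "bounded_linear (\<lambda>A. trace (X ** (A::'n::finite cmat)))"
proof -
  have "linear (\<lambda>A. trace (X ** (A::'n::finite cmat)))"
    by (rule linearI) (simp_all add: matrix_add_ldistrib trace_add matrix_scaleR_right trace_scaleR)
  then show ?thesis using linear_conv_bounded_linear by blast
qed

lemma deriv_bound_le:
  fixes f :: "real \<Rightarrow> real"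
  assumes d: "\<And>t. 0 \<le> t \<Longrightarrow> (f has_real_derivative f' t) (at t within {0..})"
    and b: "\<And>t. 0 \<le> t \<Longrightarrow> f' t \<le> B" and st: "0 \<le> s" "s \<le> t"
  shows "f t \<le> f s + B * (t - s)"
proof -
  have "\<exists>x\<in>{s..t}. f t - f s = (\<lambda>h. f' x * h) (t - s)"
  proof (rule mvt_very_simple[OF st(2)])
    fix x assume x: "s \<le> x" "x \<le> t"
    have "(f has_real_derivative f' x) (at x within {s..t})"
      by (rule DERIV_subset[OF d]) (use x st in auto)
    then show "(f has_derivative (\<lambda>h. f' x * h)) (at x within {s..t})"
      by (simp add: has_field_derivative_def)
  qed
  then obtain x where x: "x \<in> {s..t}" "f t - f s = f' x * (t - s)" by auto
  have "f' x * (t - s) \<le> B * (t - s)" using b[of x] x(1) st by (intro mult_right_mono) auto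
  then show ?thesis using x(2) by simp
qed

lemma ode_zero:
  fixes D :: "real \<Rightarrow> 'a::real_inner" and F :: "'a \<Rightarrow> 'a"
  assumes bl: "bounded_linear F"
    and d: "\<And>t. 0 \<le> t \<Longrightarrow> (D has_vector_derivative F (D t)) (at t within {0..})"
    and z: "D 0 = 0" and t: "0 \<le> t"
  shows "D t = 0"
proof -
  obtain K where K: "K > 0" "\<And>x. norm (F x) \<le> norm x * K"
    using bounded_linear.pos_bounded[OF bl] by blast
  define \<phi> where "\<phi> s = exp (- (2 * K) * s) * (D s \<bullet> D s)" for s
  define \<phi>' where "\<phi>' s = - (2 * K) * exp (- (2 * K) * s) * (D s \<bullet> D s)
      + exp (- (2 * K) * s) * (D s \<bullet> F (D s) + F (D s) \<bullet> D s)" for s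
  have der: "(\<phi> has_real_derivative \<phi>' s) (at s within {0..})" if "0 \<le> s" for s
  proof -
    have i: "((\<lambda>x. D x \<bullet> D x) has_real_derivative (D s \<bullet> F (D s) + F (D s) \<bullet> D s)) (at s within {0..})"
      using bounded_bilinear.has_vector_derivative[OF bounded_bilinear_inner d[OF that] d[OF that]]
      by (simp add: has_real_derivative_iff_has_vector_derivative)
    have e: "((\<lambda>x. exp (- (2 * K) * x)) has_real_derivative - (2 * K) * exp (- (2 * K) * s)) (at s within {0..})"
      by (auto intro!: derivative_eq_intros)
    show ?thesis unfolding \<phi>_def \<phi>'_def
      using DERIV_mult[OF e i] by (simp add: algebra_simps)
  qed
  have neg: "\<phi>' s \<le> 0" if "0 \<le> s" for s
  proof -
    have "D s \<bullet> F (D s) \<le> norm (D s) * norm (F (D s))" by (rule norm_cauchy_schwarz)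
    also have "\<dots> \<le> norm (D s) * (norm (D s) * K)" by (rule mult_left_mono[OF K(2)]) simp
    also have "\<dots> = K * (D s \<bullet> D s)" by (simp add: norm_eq_sqrt_inner)
    finally have a: "D s \<bullet> F (D s) \<le> K * (D s \<bullet> D s)" .
    have "F (D s) \<bullet> D s = D s \<bullet> F (D s)" by (rule inner_commute)
    then have "D s \<bullet> F (D s) + F (D s) \<bullet> D s \<le> 2 * K * (D s \<bullet> D s)" using a by simp
    then show ?thesis
    proof -
      have "exp (- (2 * K) * s) * (D s \<bullet> F (D s) + F (D s) \<bullet> D s) \<le> exp (- (2 * K) * s) * (2 * K * (D s \<bullet> D s))"
        by (rule mult_left_mono) (use \<open>D s \<bullet> F (D s) + F (D s) \<bullet> D s \<le> 2 * K * (D s \<bullet> D s)\<close> in auto)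
      then show ?thesis by (simp add: \<phi>'_def algebra_simps)
    qed
  qed
  have "\<phi> t \<le> \<phi> 0 + 0 * (t - 0)" by (rule deriv_bound_le[OF der neg]) (use t in auto)
  then have "\<phi> t \<le> 0" by (simp add: \<phi>_def z)
  then have "D t \<bullet> D t \<le> 0" by (simp add: \<phi>_def mult_le_0_iff)
  then show ?thesis by (metis inner_eq_zero_iff inner_ge_zero order_antisym)
qed


lemma trace_zero[simp]: "trace (0::'a::semiring_1^'n::finite^'n) = 0" by (simp add: trace_def)
lemma cinner_scaleR_right: "cinner x (c *\<^sub>R y) = c *\<^sub>R cinner x y"
  by (simp add: cinner_def scaleR_sum_right)
lemma qf_uminus: "qf (- A) v = - qf A v"
  by (simp add: qf_def cinner_def matrix_vector_mult_def sum_negf)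

definition traj :: "'n::finite cmat \<Rightarrow> (nat \<Rightarrow> 'n cmat) \<Rightarrow> nat set \<Rightarrow> (real \<Rightarrow> 'n cmat) \<Rightarrow> bool" where
  "traj H L I \<rho> \<longleftrightarrow> density (\<rho> 0) \<and>
     (\<forall>t\<ge>0. (\<rho> has_vector_derivative lindblad H L I (\<rho> t)) (at t within {0..}))"

lemma traj_deriv: "traj H L I \<rho> \<Longrightarrow> 0 \<le> t \<Longrightarrow> (\<rho> has_vector_derivative lindblad H L I (\<rho> t)) (at t within {0..})"
  by (simp add: traj_def)

lemma traj_herm:
  assumes hH: "hermitian H" and tr: "traj H L I \<rho>" and t: "0 \<le> t"
  shows "hermitian (\<rho> t)"
proof -
  define D where "D s = \<rho> s - cadj (\<rho> s)" for s
  have "D t = 0"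
  proof (rule ode_zero[OF bounded_linear_lindblad])
    fix s :: real assume s: "0 \<le> s"
    have d1: "(\<rho> has_vector_derivative lindblad H L I (\<rho> s)) (at s within {0..})" by (rule traj_deriv[OF tr s])
    have d2: "((\<lambda>x. cadj (\<rho> x)) has_vector_derivative cadj (lindblad H L I (\<rho> s))) (at s within {0..})"
      by (rule bounded_linear.has_vector_derivative[OF bounded_linear_cadj d1])
    show "(D has_vector_derivative lindblad H L I (D s)) (at s within {0..})"
      unfolding D_def lindblad_diff lindblad_cadj[OF hH, symmetric]
      using has_vector_derivative_diff[OF d1 d2] by simp
  next
    have "hermitian (\<rho> 0)" using tr by (simp add: traj_def density_def psd_def)
    then show "D 0 = 0" by (simp add: D_def hermitian_def)
  qed (rule t)
  then show ?thesis by (simp add: D_def hermitian_def)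
qed

lemma traj_Re_deriv:
  assumes tr: "traj H L I \<rho>" and t: "0 \<le> t"
  shows "((\<lambda>s. Re (trace (X ** \<rho> s))) has_real_derivative Re (trace (gen H L I X ** \<rho> t))) (at t within {0..})"
proof -
  have "((\<lambda>s. trace (X ** \<rho> s)) has_vector_derivative trace (X ** lindblad H L I (\<rho> t))) (at t within {0..})"
    by (rule bounded_linear.has_vector_derivative[OF bounded_linear_trace traj_deriv[OF tr t]])
  then have "((\<lambda>s. Re (trace (X ** \<rho> s))) has_vector_derivative Re (trace (X ** lindblad H L I (\<rho> t)))) (at t within {0..})"
    by (rule bounded_linear.has_vector_derivative[OF bounded_linear_Re])
  then show ?thesis by (simp add: has_real_derivative_iff_has_vector_derivative trace_heis)
qed

lemma traj_Im_deriv: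
  assumes tr: "traj H L I \<rho>" and t: "0 \<le> t"
  shows "((\<lambda>s. Im (trace (X ** \<rho> s))) has_real_derivative Im (trace (gen H L I X ** \<rho> t))) (at t within {0..})"
proof -
  have "((\<lambda>s. trace (X ** \<rho> s)) has_vector_derivative trace (X ** lindblad H L I (\<rho> t))) (at t within {0..})"
    by (rule bounded_linear.has_vector_derivative[OF bounded_linear_trace traj_deriv[OF tr t]])
  then have "((\<lambda>s. Im (trace (X ** \<rho> s))) has_vector_derivative Im (trace (X ** lindblad H L I (\<rho> t)))) (at t within {0..})"
    by (rule bounded_linear.has_vector_derivative[OF bounded_linear_Im])
  then show ?thesis by (simp add: has_real_derivative_iff_has_vector_derivative trace_heis)
qed

lemma deriv_zero_const:
  fixes f :: "real \<Rightarrow> real"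
  assumes d: "\<And>t. 0 \<le> t \<Longrightarrow> (f has_real_derivative 0) (at t within {0..})" and t: "0 \<le> t"
  shows "f t = f 0"
proof -
  have "f t \<le> f 0 + 0 * (t - 0)" by (rule deriv_bound_le[OF d]) (use t in auto)
  moreover have "- f t \<le> - f 0 + 0 * (t - 0)"
    by (rule deriv_bound_le[where f'="\<lambda>_. 0"]) (use t d in \<open>auto intro!: derivative_eq_intros\<close>)
  ultimately show ?thesis by simp
qed

lemma const_one: "const 1 = (mat 1 :: 'n::finite cmat)" by (simp add: const_def)

lemma traj_trace:
  fixes \<rho> :: "real \<Rightarrow> 'n::finite cmat"
  assumes tr: "traj H L I \<rho>" and t: "0 \<le> t"
  shows "trace (\<rho> t) = 1"
proof -
  have g0: "gen H L I (mat 1) = (0::'n cmat)" using gen_const[of H L I 1] by (simp add: const_one)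
  have "Re (trace (mat 1 ** \<rho> t)) = Re (trace (mat 1 ** \<rho> 0))"
    by (rule deriv_zero_const[OF _ t]) (use traj_Re_deriv[OF tr, of _ "mat 1"] g0 in auto)
  moreover have "Im (trace (mat 1 ** \<rho> t)) = Im (trace (mat 1 ** \<rho> 0))"
    by (rule deriv_zero_const[OF _ t]) (use traj_Im_deriv[OF tr, of _ "mat 1"] g0 in auto)
  moreover have "trace (\<rho> 0) = 1" using tr by (simp add: traj_def density_def)
  ultimately show ?thesis by (simp add: complex_eq_iff)
qed

lemma qf_ltm_kernel:
  assumes hs: "hermitian \<sigma>" and k: "\<sigma> *v u = 0"
  shows "qf (ltm M \<sigma>) u = qf \<sigma> (cadj M *v u)"
proof -
  have "ltm M \<sigma> *v u = M *v (\<sigma> *v (cadj M *v u)) - (1/2::real) *\<^sub>R (cadj M *v (M *v (\<sigma> *v u)))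
      - (1/2::real) *\<^sub>R (\<sigma> *v (cadj M *v (M *v u)))"
    by (simp add: ltm_def matrix_vector_diff_left matrix_vector_scaleR_left matrix_vector_mul_assoc[symmetric])
  also have "\<dots> = M *v (\<sigma> *v (cadj M *v u)) - (1/2::real) *\<^sub>R (\<sigma> *v (cadj M *v (M *v u)))"
    using k by simp
  finally have e: "ltm M \<sigma> *v u = M *v (\<sigma> *v (cadj M *v u)) - (1/2::real) *\<^sub>R (\<sigma> *v (cadj M *v (M *v u)))" .
  have "cinner u (\<sigma> *v (cadj M *v (M *v u))) = 0"
    using k by (simp add: hermitian_cinner[OF hs])
  then show ?thesis
    by (simp add: qf_def e cinner_diff_right cinner_scaleR_right cinner_mat)
qed

lemma lindblad_kernel:
  assumes ps: "psd \<sigma>" and k: "\<sigma> *v u = 0"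
  shows "0 \<le> Re (qf (lindblad H L I \<sigma>) u)"
proof -
  have hs: "hermitian \<sigma>" using ps by (simp add: psd_def)
  have h0: "qf (mat \<i> ** comm H \<sigma>) u = 0"
  proof -
    have "qf (mat \<i> ** comm H \<sigma>) u = \<i> * (cinner u (H *v (\<sigma> *v u)) - cinner u (\<sigma> *v (H *v u)))"
      by (simp add: qf_def comm_def mat_mult_left[symmetric] matrix_vector_mul_assoc[symmetric]
          matrix_vector_diff_left mat_vector cinner_scale_right cinner_diff_right right_diff_distrib)
    also have "\<dots> = 0" using k by (simp add: hermitian_cinner[OF hs])
    finally show ?thesis .
  qed
  have "qf (lindblad H L I \<sigma>) u = (\<Sum>k\<in>I. qf \<sigma> (cadj (L k) *v u))"
    by (simp only: lindblad_ltm qf_add qf_sum qf_uminus h0 qf_ltm_kernel[OF hs k]) simp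
  then show ?thesis using ps by (simp add: psd_qf sum_nonneg)
qed


lemma traj_cont: "traj H L I \<rho> \<Longrightarrow> continuous_on {0..} \<rho>"
  unfolding continuous_on_eq_continuous_within
  using traj_deriv has_vector_derivative_continuous by fastforce

lemma qf_scaleR_vec: "qf A (c *\<^sub>R v) = complex_of_real (c^2) * qf A v"
  using qf_real_scale[of A c v] by (simp add: ofreal_scale)

lemma psd_from_unit:
  assumes h: "hermitian A" and u: "\<And>v. norm v = 1 \<Longrightarrow> 0 \<le> Re (qf A v)"
  shows "psd A"
proof -
  have "0 \<le> Re (qf A v)" for v
  proof (cases "v = 0")
    case True then show ?thesis by (simp add: qf_def)
  next
    case False
    define w where "w = (1 / norm v) *\<^sub>R v"
    have "norm w = 1" using False by (simp add: w_def)
    then have "0 \<le> Re (qf A w)" by (rule u)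
    also have "qf A w = complex_of_real ((1 / norm v)^2) * qf A v" by (simp add: w_def qf_scaleR_vec)
    finally show ?thesis using False by (simp add: zero_le_mult_iff)
  qed
  then show ?thesis using h by (simp add: psd_qf)
qed

lemma traj_pos_eps:
  fixes \<rho> :: "real \<Rightarrow> 'n::finite cmat"
  assumes hH: "hermitian H" and tr: "traj H L I \<rho>" and ep: "0 < \<epsilon>"
  defines "\<beta> \<equiv> (\<Sum>i\<in>UNIV. \<Sum>j\<in>UNIV. cmod (lindblad H L I (mat 1) $ i $ j)) + 1"
  shows "\<forall>s\<ge>0. \<forall>v. norm v = 1 \<longrightarrow> 0 < Re (qf (\<rho> s) v) + \<epsilon> * exp (\<beta> * s)"
proof (rule ccontr)
  define q where "q s v = Re (qf (\<rho> s) v) + \<epsilon> * exp (\<beta> * s) * (norm v)^2" for s v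
  have qs: "q s v = Re (qf (\<rho> s + const (\<epsilon> * exp (\<beta> * s))) v)" for s v
    by (simp add: q_def qf_add qf_const)
  assume "\<not> ?thesis"
  then obtain t0 v0 where t0: "0 \<le> t0" and v0: "norm v0 = 1" and q0: "q t0 v0 \<le> 0"
    by (auto simp: q_def not_less)
  define A where "A = {0..t0} \<times> sphere (0::complex^'n) 1"
  define qq where "qq p = q (fst p) (snd p)" for p
  have cA: "compact A" by (simp add: A_def compact_Times)
  have contr: "continuous_on A (\<lambda>p. \<rho> (fst p))"
    by (rule continuous_on_compose2[OF traj_cont[OF tr] continuous_on_fst[OF continuous_on_id]]) (auto simp: A_def)
  have cq: "continuous_on A qq"
    unfolding qq_def q_def qf_def cinner_def matrix_vector_mult_def
    by (intro continuous_intros contr)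
  define S where "S = A \<inter> qq -` {..0}"
  have clS: "closed S" unfolding S_def
    by (rule continuous_closed_preimage[OF cq compact_imp_closed[OF cA] closed_atMost])
  have cS: "compact S" using compact_Int_closed[OF cA clS] by (simp add: S_def Int_absorb1)
  define T where "T = fst ` S"
  have cT: "compact T" unfolding T_def by (rule compact_continuous_image[OF continuous_on_fst[OF continuous_on_id] cS])
  have "(t0, v0) \<in> S" using t0 v0 q0 by (simp add: S_def A_def qq_def)
  then have neT: "T \<noteq> {}" by (auto simp: T_def)
  obtain ts where tsT: "ts \<in> T" and tsmin: "\<forall>t\<in>T. ts \<le> t" using compact_attains_inf[OF cT neT] by blast
  obtain u where tsu: "(ts, u) \<in> S" using tsT by (auto simp: T_def)
  then have ts0: "0 \<le> ts" and tst0: "ts \<le> t0" and nu: "norm u = 1" and qu: "q ts u \<le> 0"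
    by (auto simp: S_def A_def qq_def)
  have before: "0 < q s v" if "0 \<le> s" "s < ts" "norm v = 1" for s v
  proof (rule ccontr)
    assume "\<not> 0 < q s v"
    then have "(s, v) \<in> S" using that tst0 by (auto simp: S_def A_def qq_def)
    then have "s \<in> T" by (force simp: T_def)
    then show False using tsmin that by force
  qed
  have ps0: "psd (\<rho> 0)" using tr by (simp add: traj_def density_def)
  have "q 0 u > 0" using ps0 nu ep by (simp add: q_def psd_qf add_nonneg_pos)
  then have tsp: "ts > 0" using qu ts0 by (cases "ts = 0") auto
  have qder: "((\<lambda>s. q s v) has_real_derivative
      (Re (qf (lindblad H L I (\<rho> s)) v) + \<epsilon> * (\<beta> * exp (\<beta> * s)) * (norm v)^2)) (at s within {0..})"
    if "0 \<le> s" for s v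
  proof -
    have bl: "bounded_linear (\<lambda>A. Re (qf A v))"
    proof -
      have "linear (\<lambda>A::'n cmat. Re (qf A v))"
        by (rule linearI) (simp_all add: qf_add qf_scaleR)
      then show ?thesis using linear_conv_bounded_linear by blast
    qed
    have "((\<lambda>s. Re (qf (\<rho> s) v)) has_vector_derivative Re (qf (lindblad H L I (\<rho> s)) v)) (at s within {0..})"
      by (rule bounded_linear.has_vector_derivative[OF bl traj_deriv[OF tr that]])
    then have d1: "((\<lambda>s. Re (qf (\<rho> s) v)) has_real_derivative Re (qf (lindblad H L I (\<rho> s)) v)) (at s within {0..})"
      by (simp add: has_real_derivative_iff_has_vector_derivative)
    show ?thesis unfolding q_def
      by (rule derivative_eq_intros d1 refl | simp)+
  qed
  have nonneg: "0 \<le> q ts v" if nv: "norm v = 1" for v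
  proof (rule ccontr)
    assume "\<not> 0 \<le> q ts v"
    then have neg: "q ts v < 0" by simp
    have "continuous (at ts within {0..}) (\<lambda>s. q s v)" using DERIV_continuous[OF qder[OF ts0]] .
    then have "((\<lambda>s. q s v) \<longlongrightarrow> q ts v) (at ts within {0..})" by (simp add: continuous_within)
    then have "eventually (\<lambda>s. q s v < 0) (at ts within {0..})" using neg by (rule order_tendstoD)
    then obtain d where d: "d > 0" "\<forall>x\<in>{0..}. x \<noteq> ts \<and> dist x ts < d \<longrightarrow> q x v < 0"
      by (auto simp: eventually_at)
    define s where "s = ts - min d ts / 2"
    have "s \<in> {0..}" "s \<noteq> ts" "dist s ts < d" using d tsp by (auto simp: s_def dist_real_def)
    then have "q s v < 0" using d(2) by blast
    moreover have "0 < q s v" by (rule before) (use d tsp nv in \<open>auto simp: s_def\<close>)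
    ultimately show False by simp
  qed
  define c where "c = \<epsilon> * exp (\<beta> * ts)"
  have cp: "c > 0" using ep by (simp add: c_def)
  define \<sigma> where "\<sigma> = \<rho> ts + const c"
  have hs: "hermitian \<sigma>" using traj_herm[OF hH tr ts0] hermitian_const[of c]
    by (simp add: \<sigma>_def hermitian_def cadj_add)
  have psig: "psd \<sigma>"
    by (rule psd_from_unit[OF hs]) (use nonneg in \<open>simp add: qs \<sigma>_def c_def\<close>)
  have qz: "Re (qf \<sigma> u) = 0" using nonneg[OF nu] qu by (simp add: qs \<sigma>_def c_def)
  have ker: "\<sigma> *v u = 0" by (rule psd_kernel[OF psig qz])
  have lk: "0 \<le> Re (qf (lindblad H L I \<sigma>) u)" by (rule lindblad_kernel[OF psig ker])
  have cm: "const c = c *\<^sub>R (mat 1 :: 'n cmat)" by (simp add: const_def vec_eq_iff mat_def del: scaleR_conv_of_real) (simp add: scaleR_conv_of_real)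
  have "\<rho> ts = \<sigma> - c *\<^sub>R mat 1" by (simp add: \<sigma>_def cm)
  then have lr: "lindblad H L I (\<rho> ts) = lindblad H L I \<sigma> - c *\<^sub>R lindblad H L I (mat 1)"
    by (simp add: lindblad_diff lindblad_scaleR)
  have "cmod (qf (lindblad H L I (mat 1)) u) \<le> (\<beta> - 1) * (norm u)^2"
    using qf_bound[of "lindblad H L I (mat 1)" u] by (simp add: \<beta>_def)
  then have b1: "Re (qf (lindblad H L I (mat 1)) u) \<le> \<beta> - 1" using nu abs_Re_le_cmod[of "qf (lindblad H L I (mat 1)) u"]
    by simp
  have "Re (qf (lindblad H L I (\<rho> ts)) u) = Re (qf (lindblad H L I \<sigma>) u) - c * Re (qf (lindblad H L I (mat 1)) u)"
    by (simp add: lr qf_diff qf_scaleR)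
  also have "\<dots> \<ge> 0 - c * (\<beta> - 1)" using lk b1 cp by (intro diff_mono mult_left_mono) auto
  finally have "Re (qf (lindblad H L I (\<rho> ts)) u) + \<epsilon> * (\<beta> * exp (\<beta> * ts)) * (norm u)^2 \<ge> c"
    using nu by (simp add: c_def algebra_simps)
  then have dpos: "0 < Re (qf (lindblad H L I (\<rho> ts)) u) + \<epsilon> * (\<beta> * exp (\<beta> * ts)) * (norm u)^2"
    using cp by linarith
  have "((\<lambda>s. q s u) has_real_derivative
      (Re (qf (lindblad H L I (\<rho> ts)) u) + \<epsilon> * (\<beta> * exp (\<beta> * ts)) * (norm u)^2)) (at ts within {0<..})"
    by (rule DERIV_subset[OF qder[OF ts0]]) auto
  then have "((\<lambda>s. q s u) has_real_derivative
      (Re (qf (lindblad H L I (\<rho> ts)) u) + \<epsilon> * (\<beta> * exp (\<beta> * ts)) * (norm u)^2)) (at ts)"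
    using at_within_open[of ts "{0<..}"] tsp by simp
  from DERIV_pos_inc_left[OF this dpos] obtain d where d: "d > 0" "\<forall>h>0. h < d \<longrightarrow> q (ts - h) u < q ts u"
    by blast
  define h where "h = min d ts / 2"
  have "q (ts - h) u < q ts u" using d tsp by (simp add: h_def)
  moreover have "q ts u = 0" using nonneg[OF nu] qu by simp
  moreover have "0 < q (ts - h) u" by (rule before) (use d tsp nu in \<open>auto simp: h_def\<close>)
  ultimately show False by simp
qed

lemma traj_psd:
  fixes \<rho> :: "real \<Rightarrow> 'n::finite cmat"
  assumes hH: "hermitian H" and tr: "traj H L I \<rho>" and t: "0 \<le> t"
  shows "psd (\<rho> t)"
proof (rule psd_from_unit[OF traj_herm[OF hH tr t]])
  fix v :: "complex^'n" assume nv: "norm v = 1"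
  define \<beta> where "\<beta> = (\<Sum>i\<in>UNIV. \<Sum>j\<in>UNIV. cmod (lindblad H L I (mat 1) $ i $ j)) + 1"
  define a where "a = Re (qf (\<rho> t) v)"
  have all: "0 < a + \<epsilon> * exp (\<beta> * t)" if "0 < \<epsilon>" for \<epsilon>
    using traj_pos_eps[OF hH tr that] t nv by (simp add: a_def \<beta>_def)
  show "0 \<le> Re (qf (\<rho> t) v)"
  proof (rule ccontr)
    assume "\<not> 0 \<le> Re (qf (\<rho> t) v)"
    then have an: "a < 0" by (simp add: a_def)
    define \<epsilon> where "\<epsilon> = - a / exp (\<beta> * t)"
    have "0 < \<epsilon>" using an by (simp add: \<epsilon>_def divide_neg_pos)
    from all[OF this] show False by (simp add: \<epsilon>_def)
  qed
qed


lemma psd_zero: "psd (0::'n::finite cmat)" by (simp add: psd_qf hermitian_def)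
lemma psd_add: "psd A \<Longrightarrow> psd B \<Longrightarrow> psd (A + B)"
  by (simp add: psd_qf hermitian_def cadj_add qf_add)
lemma psd_sum: "(\<And>k. k \<in> S \<Longrightarrow> psd (f k)) \<Longrightarrow> psd (sum f S :: 'n::finite cmat)"
  by (induct S rule: infinite_finite_induct) (auto simp: psd_zero psd_add)
lemma op_le_add: "op_le A B \<Longrightarrow> op_le C D \<Longrightarrow> op_le (A + C) (B + D)"
  unfolding op_le_def using psd_add by (metis add_diff_add)
lemma op_le_refl: "op_le A A" by (simp add: op_le_def psd_zero)

lemma psd_sandwich: "psd P \<Longrightarrow> psd (B ** P ** cadj B)"
proof -
  assume p: "psd P"
  have e: "qf (B ** P ** cadj B) v = qf P (cadj B *v v)" for v
    unfolding qf_def by (simp only: matrix_vector_mul_assoc[symmetric] cinner_mat[of v B])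
  show ?thesis using p by (simp add: psd_qf e hermitian_def cadj_mult matrix_mul_assoc)
qed

lemma psd_comm_sq: "cadj X = X \<Longrightarrow> psd (comm (cadj L) X ** comm X L)"
proof -
  assume h: "cadj X = X"
  have "cadj (comm X L) = comm (cadj L) X" by (simp add: comm_def cadj_diff cadj_mult h)
  then have e: "comm (cadj L) X ** comm X L = cadj (comm X L) ** comm X L" by simp
  show ?thesis unfolding e
  proof -
    have "qf (cadj (comm X L) ** comm X L) v = complex_of_real ((norm (comm X L *v v))^2)" for v
      by (simp only: qf_mult cadj_cadj cinner_self)
    then show "psd (cadj (comm X L) ** comm X L)"
      by (simp add: psd_qf hermitian_def cadj_mult)
  qed
qed

lemma trace_le:
  assumes "psd \<rho>" "op_le A B"
  shows "Re (trace (A ** \<rho>)) \<le> Re (trace (B ** \<rho>))"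
proof -
  have "0 \<le> Re (trace ((B - A) ** \<rho>))" using trace_psd_nonneg assms by (auto simp: op_le_def)
  then show ?thesis by (simp add: matrix_diff_rdistrib trace_sub)
qed

lemma trace_const: "trace (const c ** \<rho>) = complex_of_real c * trace (\<rho>::'n::finite cmat)"
  by (simp add: const_def trace_mat_mult)

lemma trace_bound:
  assumes hQ: "hermitian Q" and p: "psd \<rho>" and t1: "trace \<rho> = 1"
  shows "Re (trace (Q ** \<rho>)) \<le> (\<Sum>i\<in>UNIV. \<Sum>j\<in>UNIV. cmod (Q$i$j))"
proof -
  define b where "b = (\<Sum>i\<in>UNIV. \<Sum>j\<in>UNIV. cmod (Q$i$j))"
  have "op_le Q (const b)"
  proof -
    have "hermitian (const b - Q)" using hQ hermitian_const[of b] by (simp add: hermitian_def cadj_diff)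
    moreover have "0 \<le> Re (qf (const b - Q) v)" for v
    proof -
      have "Re (qf Q v) \<le> b * (norm v)^2"
        using qf_bound[of Q v] abs_Re_le_cmod[of "qf Q v"] by (simp add: b_def)
      then show ?thesis by (simp add: qf_diff qf_const)
    qed
    ultimately show ?thesis by (simp add: op_le_def psd_qf)
  qed
  from trace_le[OF p this] show ?thesis by (simp add: trace_const t1 b_def)
qed

lemma tendsto_from_eps:
  fixes f :: "real \<Rightarrow> real"
  assumes nn: "\<And>t. 0 \<le> t \<Longrightarrow> 0 \<le> f t" and dec: "\<And>s t. 0 \<le> s \<Longrightarrow> s \<le> t \<Longrightarrow> f t \<le> f s"
    and eps: "\<And>\<epsilon>. 0 < \<epsilon> \<Longrightarrow> \<exists>t\<ge>0. f t < \<epsilon>"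
  shows "(f \<longlongrightarrow> 0) at_top"
proof (rule order_tendstoI)
  fix a :: real assume "a < 0"
  show "eventually (\<lambda>t. a < f t) at_top"
    using eventually_ge_at_top[of 0] by (rule eventually_mono) (use nn \<open>a < 0\<close> in force)
next
  fix a :: real assume "0 < a"
  then obtain t0 where t0: "0 \<le> t0" "f t0 < a" using eps by blast
  show "eventually (\<lambda>t. f t < a) at_top"
    using eventually_ge_at_top[of t0] by (rule eventually_mono) (use dec t0 in force)
qed

lemma stable_core_i:
  fixes \<rho> :: "real \<Rightarrow> 'n::finite cmat"
  assumes hH: "hermitian H" and tr: "traj H L I \<rho>" and pV: "psd V" and c: "0 < c"
    and G: "op_le (gen H L I V) ((-c) *\<^sub>R V)"
  shows "((\<lambda>t. Re (trace (V ** \<rho> t))) \<longlongrightarrow> 0) at_top"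
proof -
  define f where "f t = Re (trace (V ** \<rho> t))" for t
  have d: "(f has_real_derivative Re (trace (gen H L I V ** \<rho> t))) (at t within {0..})" if "0 \<le> t" for t
    unfolding f_def by (rule traj_Re_deriv[OF tr that])
  have nn: "0 \<le> f t" if "0 \<le> t" for t
    unfolding f_def by (rule trace_psd_nonneg[OF pV traj_psd[OF hH tr that]])
  have dle: "Re (trace (gen H L I V ** \<rho> t)) \<le> - c * f t" if "0 \<le> t" for t
    using trace_le[OF traj_psd[OF hH tr that] G] by (simp add: f_def matrix_scaleR_left matrix_uminus_left trace_uminus trace_scaleR)
  have dle0: "Re (trace (gen H L I V ** \<rho> t)) \<le> 0" if "0 \<le> t" for t
    using dle[OF that] mult_nonneg_nonneg[of c "f t"] nn[OF that] c by linarith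
  show ?thesis unfolding f_def[symmetric]
  proof (rule tendsto_from_eps[OF nn])
    fix s t :: real assume "0 \<le> s" "s \<le> t"
    then show "f t \<le> f s" using deriv_bound_le[OF d dle0, of s t] by simp
  next
    fix \<epsilon> :: real assume ep: "0 < \<epsilon>"
    show "\<exists>t\<ge>0. f t < \<epsilon>"
    proof (rule ccontr)
      assume "\<not> ?thesis"
      then have ge: "\<And>t. 0 \<le> t \<Longrightarrow> \<epsilon> \<le> f t" by (auto simp: not_less)
      have b: "Re (trace (gen H L I V ** \<rho> t)) \<le> - (c * \<epsilon>)" if "0 \<le> t" for t
        using dle[OF that] mult_left_mono[OF ge[OF that], of c] c by linarith
      define T where "T = (f 0 + 1) / (c * \<epsilon>)"
      have T0: "0 \<le> T" using nn[of 0] c ep by (simp add: T_def)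
      have "f T \<le> f 0 + (- (c * \<epsilon>)) * (T - 0)" by (rule deriv_bound_le[OF d b]) (use T0 in auto)
      also have "\<dots> = -1" using c ep by (simp add: T_def)
      finally show False using nn[OF T0] by simp
    qed
  qed
qed


lemma sandwich_identity:
  fixes V P :: "'n::finite cmat"
  assumes hV: "cadj V = V"
  shows "(s *\<^sub>R V - mat 1) ** P ** cadj (s *\<^sub>R V - mat 1)
    = (s * s) *\<^sub>R (V ** P ** V) - s *\<^sub>R (V ** P) - s *\<^sub>R (P ** V) + P"
proof -
  have c: "cadj (s *\<^sub>R V - mat 1) = s *\<^sub>R V - (mat 1 :: 'n cmat)"
    by (simp add: cadj_diff cadj_scaleR hV cadj_mat)
  show ?thesis unfolding c by (simp add: mexp algebra_simps)
qed

lemma stable_core_ii: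
  fixes \<rho> :: "real \<Rightarrow> 'n::finite cmat"
  assumes hH: "hermitian H" and tr: "traj H L I \<rho>" and pV: "psd V" and c: "0 < c"
    and G: "op_le (gen H L I V) 0" and Dv: "op_le (c *\<^sub>R V) (diss H L I V)"
  shows "((\<lambda>t. Re (trace (V ** \<rho> t))) \<longlongrightarrow> 0) at_top"
proof -
  have hV: "cadj V = V" using pV by (simp add: psd_def hermitian_def)
  define P where "P = - gen H L I V"
  have pP: "psd P" using G by (simp add: op_le_def P_def)
  have hP: "cadj P = P" using pP by (simp add: psd_def hermitian_def)
  define f where "f t = Re (trace (V ** \<rho> t))" for t
  define g where "g t = Re (trace ((V ** V) ** \<rho> t))" for t
  have psdr: "psd (\<rho> t)" if "0 \<le> t" for t by (rule traj_psd[OF hH tr that])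
  have tr1: "trace (\<rho> t) = 1" if "0 \<le> t" for t by (rule traj_trace[OF tr that])
  have df: "(f has_real_derivative - Re (trace (P ** \<rho> t))) (at t within {0..})" if "0 \<le> t" for t
    unfolding f_def[abs_def] P_def using traj_Re_deriv[OF tr that, of V] by (simp add: matrix_uminus_left trace_uminus)
  have dg: "(g has_real_derivative Re (trace (gen H L I (V ** V) ** \<rho> t))) (at t within {0..})" if "0 \<le> t" for t
    unfolding g_def by (rule traj_Re_deriv[OF tr that])
  have nn: "0 \<le> f t" if "0 \<le> t" for t
    unfolding f_def by (rule trace_psd_nonneg[OF pV psdr[OF that]])
  have Pnn: "0 \<le> Re (trace (P ** \<rho> t))" if "0 \<le> t" for t by (rule trace_psd_nonneg[OF pP psdr[OF that]])
  define \<beta>1 where "\<beta>1 = (\<Sum>i\<in>UNIV. \<Sum>j\<in>UNIV. cmod ((V ** P ** V)$i$j))"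
  define \<beta>2 where "\<beta>2 = (\<Sum>i\<in>UNIV. \<Sum>j\<in>UNIV. cmod ((V ** V)$i$j))"
  have b1: "Re (trace ((V ** P ** V) ** \<rho> t)) \<le> \<beta>1" if "0 \<le> t" for t
    unfolding \<beta>1_def
    by (rule trace_bound[OF _ psdr[OF that] tr1[OF that]]) (simp add: hermitian_def cadj_mult hV hP matrix_mul_assoc)
  have b2: "g t \<le> \<beta>2" if "0 \<le> t" for t
    unfolding \<beta>2_def g_def
    by (rule trace_bound[OF _ psdr[OF that] tr1[OF that]]) (simp add: hermitian_def cadj_mult hV)
  have gV: "gen H L I (V ** V) = diss H L I V - P ** V - V ** P"
    by (simp add: diss_def hV P_def matrix_uminus_left matrix_uminus_right)
  have amgm: "Re (trace ((P ** V + V ** P) ** \<rho> t)) \<le> s * Re (trace ((V ** P ** V) ** \<rho> t)) + Re (trace (P ** \<rho> t)) / s"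
    if "0 \<le> t" "0 < s" for t s
  proof -
    have "0 \<le> Re (trace (((s *\<^sub>R V - mat 1) ** P ** cadj (s *\<^sub>R V - mat 1)) ** \<rho> t))"
      by (rule trace_psd_nonneg[OF psd_sandwich[OF pP] psdr[OF that(1)]])
    also have "\<dots> = s * s * Re (trace ((V ** P ** V) ** \<rho> t)) - s * Re (trace ((V ** P) ** \<rho> t))
        - s * Re (trace ((P ** V) ** \<rho> t)) + Re (trace (P ** \<rho> t))"
      unfolding sandwich_identity[OF hV]
      by (simp add: matrix_add_rdistrib' matrix_diff_rdistrib matrix_scaleR_left trace_add trace_sub trace_scaleR)
    finally have "s * (Re (trace ((V ** P) ** \<rho> t)) + Re (trace ((P ** V) ** \<rho> t)))
        \<le> s * (s * Re (trace ((V ** P ** V) ** \<rho> t)) + Re (trace (P ** \<rho> t)) / s)"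
      using that by (simp add: algebra_simps)
    then have "Re (trace ((V ** P) ** \<rho> t)) + Re (trace ((P ** V) ** \<rho> t))
        \<le> s * Re (trace ((V ** P ** V) ** \<rho> t)) + Re (trace (P ** \<rho> t)) / s"
      using that by (simp add: mult_le_cancel_left_pos)
    then show ?thesis by (simp add: matrix_add_rdistrib' trace_add)
  qed
  have dgle: "c * f t - s * \<beta>1 - Re (trace (P ** \<rho> t)) / s \<le> Re (trace (gen H L I (V ** V) ** \<rho> t))"
    if "0 \<le> t" "0 < s" for t s
  proof -
    have "Re (trace ((c *\<^sub>R V) ** \<rho> t)) \<le> Re (trace (diss H L I V ** \<rho> t))"
      by (rule trace_le[OF psdr[OF that(1)] Dv])
    then have 1: "c * f t \<le> Re (trace (diss H L I V ** \<rho> t))"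
      by (simp add: f_def matrix_scaleR_left trace_scaleR)
    have 2: "Re (trace ((P ** V + V ** P) ** \<rho> t)) \<le> s * \<beta>1 + Re (trace (P ** \<rho> t)) / s"
      using amgm[OF that] b1[OF that(1)] that(2) mult_left_mono[OF b1[OF that(1)], of s] by linarith
    have "Re (trace (gen H L I (V ** V) ** \<rho> t)) = Re (trace (diss H L I V ** \<rho> t)) - Re (trace ((P ** V + V ** P) ** \<rho> t))"
      by (simp add: gV matrix_diff_rdistrib matrix_add_rdistrib' trace_sub trace_add)
    then show ?thesis using 1 2 by linarith
  qed
  show ?thesis unfolding f_def[symmetric]
  proof (rule tendsto_from_eps[OF nn])
    fix s t :: real assume "0 \<le> s" "s \<le> t"
    then show "f t \<le> f s" using deriv_bound_le[OF df _ \<open>0 \<le> s\<close> \<open>s \<le> t\<close>, of 0] Pnn by simp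
  next
    fix \<epsilon> :: real assume ep: "0 < \<epsilon>"
    show "\<exists>t\<ge>0. f t < \<epsilon>"
    proof (rule ccontr)
      assume "\<not> ?thesis"
      then have ge: "\<And>t. 0 \<le> t \<Longrightarrow> \<epsilon> \<le> f t" by (auto simp: not_less)
      define s where "s = c * \<epsilon> / (2 * (\<bar>\<beta>1\<bar> + 1))"
      have sp: "0 < s" using c ep by (simp add: s_def)
      have sb: "s * \<beta>1 \<le> c * \<epsilon> / 2"
      proof -
        have "s * \<beta>1 \<le> s * (\<bar>\<beta>1\<bar> + 1)" using sp by (intro mult_left_mono) auto
        also have "\<dots> = c * \<epsilon> / 2"
        proof -
          have ne: "\<bar>\<beta>1\<bar> + 1 \<noteq> 0" by (metis abs_ge_zero add_pos_nonneg less_irrefl zero_less_one add.commute)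
          then show ?thesis by (simp add: s_def field_simps)
        qed
        finally show ?thesis .
      qed
      define h where "h t = f t / s - g t" for t
      have dh: "(h has_real_derivative (- Re (trace (P ** \<rho> t)) / s - Re (trace (gen H L I (V ** V) ** \<rho> t))))
          (at t within {0..})" if "0 \<le> t" for t
        unfolding h_def[abs_def] by (rule DERIV_diff[OF DERIV_cdivide[OF df[OF that]] dg[OF that]])
      have hb: "- Re (trace (P ** \<rho> t)) / s - Re (trace (gen H L I (V ** V) ** \<rho> t)) \<le> - (c * \<epsilon> / 2)"
        if "0 \<le> t" for t
      proof -
        have "c * \<epsilon> \<le> c * f t" using ge[OF that] c by (intro mult_left_mono) auto
        then show ?thesis using dgle[OF that sp] sb by (simp add: field_simps)
      qed
      define T where "T = (h 0 + \<beta>2 + 1) / (c * \<epsilon> / 2)"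
      have cpos: "0 < c * \<epsilon> / 2" using c ep by simp
      have h0: "- \<beta>2 \<le> h 0" using divide_nonneg_pos[OF nn[of 0] sp] b2[of 0] by (simp add: h_def)
      have T0: "0 \<le> T" using h0 cpos by (simp add: T_def)
      have "h T \<le> h 0 + (- (c * \<epsilon> / 2)) * (T - 0)" by (rule deriv_bound_le[OF dh hb]) (use T0 in auto)
      also have "\<dots> = - \<beta>2 - 1"
      proof -
        have "(c * \<epsilon> / 2) * T = h 0 + \<beta>2 + 1" unfolding T_def using cpos by (metis less_numeral_extra(3) nonzero_mult_div_cancel_left times_divide_eq_right)
        then show ?thesis by (simp add: algebra_simps)
      qed
      finally have "h T \<le> - \<beta>2 - 1" .
      moreover have "- \<beta>2 \<le> h T" using divide_nonneg_pos[OF nn[OF T0] sp] b2[OF T0] by (simp add: h_def)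
      ultimately show False by simp
    qed
  qed
qed


lemma diss_cross:
  fixes A B :: "'n::finite cmat"
  assumes hA: "cadj A = A" and hB: "cadj B = B"
  shows "diss H L I (A + B) = diss H L I A + diss H L I B
     + 2 *\<^sub>R (\<Sum>k\<in>I. mRe (comm (cadj (L k)) A ** comm B (L k)))"
proof -
  have hAB: "cadj (A + B) = A + B" by (simp add: cadj_add hA hB)
  have per: "comm (cadj M) (A + B) ** comm (A + B) M = comm (cadj M) A ** comm A M + comm (cadj M) B ** comm B M
      + 2 *\<^sub>R mRe (comm (cadj M) A ** comm B M)" for M
  proof -
    have c1: "cadj (comm B M) = comm (cadj M) B" by (simp add: comm_def cadj_diff cadj_mult hB)
    have c2: "cadj (comm (cadj M) A) = comm A M" by (simp add: comm_def cadj_diff cadj_mult hA)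
    have "2 *\<^sub>R mRe (comm (cadj M) A ** comm B M) = comm (cadj M) A ** comm B M + comm (cadj M) B ** comm A M"
      by (simp add: mRe_def cadj_mult c1 c2)
    then show ?thesis
      by (simp add: comm_add_right comm_add_left matrix_add_ldistrib matrix_add_rdistrib' algebra_simps)
  qed
  show ?thesis
    unfolding diss_herm[OF hAB] diss_herm[OF hA] diss_herm[OF hB] per
    by (simp add: sum.distrib scaleR_sum_right)
qed

lemma final_from_core:
  fixes X :: "'n::finite cmat"
  assumes hH: "hermitian H" and hX: "hermitian X" and pV: "psd (X - const d)"
    and core: "\<And>\<rho>. traj H L I \<rho> \<Longrightarrow> ((\<lambda>t. Re (trace ((X - const d) ** \<rho> t))) \<longlongrightarrow> 0) at_top"
  shows "ags_stable H L I X"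
  unfolding ags_stable_def
proof (intro allI impI)
  fix \<rho> :: "real \<Rightarrow> 'n cmat"
  assume "density (\<rho> 0) \<and> (\<forall>t\<ge>0. (\<rho> has_vector_derivative lindblad H L I (\<rho> t)) (at t within {0..}))"
  then have tr: "traj H L I \<rho>" by (simp add: traj_def)
  have eq: "trace (X ** \<rho> t) = complex_of_real (Re (trace ((X - const d) ** \<rho> t)) + d)" if "0 \<le> t" for t
  proof -
    have im: "Im (trace (X ** \<rho> t)) = 0" by (rule trace_herm_real[OF hX traj_herm[OF hH tr that]])
    have "trace (X ** \<rho> t) = trace ((X - const d) ** \<rho> t) + complex_of_real d"
      by (simp add: matrix_diff_rdistrib trace_sub trace_const traj_trace[OF tr that])
    then show ?thesis using im by (simp add: complex_eq_iff)
  qed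
  have lim: "((\<lambda>t. Re (trace ((X - const d) ** \<rho> t)) + d) \<longlongrightarrow> 0 + d) at_top"
    by (intro tendsto_intros core[OF tr])
  have md: "min_eig X = d"
  proof (rule antisym)
    have "\<forall>v. d * (norm v)^2 \<le> Re (qf X v)"
      using pV by (auto simp: psd_qf qf_diff qf_const)
    then show "d \<le> min_eig X" by (rule min_eig_ge[OF hX])
  next
    define m where "m = min_eig X"
    have pm: "psd (X - const m)" using min_eig_props[OF hX] by (simp add: m_def)
    have "m \<le> Re (trace ((X - const d) ** \<rho> t)) + d" if "0 \<le> t" for t
    proof -
      have "0 \<le> Re (trace ((X - const m) ** \<rho> t))" by (rule trace_psd_nonneg[OF pm traj_psd[OF hH tr that]])
      then show ?thesis
        by (simp add: matrix_diff_rdistrib trace_sub trace_const traj_trace[OF tr that])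
    qed
    then have "eventually (\<lambda>t. m \<le> Re (trace ((X - const d) ** \<rho> t)) + d) at_top"
      using eventually_ge_at_top[of 0] by (rule eventually_mono[rotated]) 
    then have "m \<le> 0 + d" by (rule tendsto_lowerbound[OF lim]) simp
    then show "min_eig X \<le> d" by (simp add: m_def)
  qed
  have "((\<lambda>t. complex_of_real (Re (trace ((X - const d) ** \<rho> t)) + d)) \<longlongrightarrow> complex_of_real d) at_top"
    using tendsto_of_real[OF lim] by simp
  then show "((\<lambda>t. trace (X ** \<rho> t)) \<longlongrightarrow> complex_of_real (min_eig X)) at_top"
    unfolding md
  proof (rule Lim_transform_eventually)
    show "eventually (\<lambda>t. complex_of_real (Re (trace ((X - const d) ** \<rho> t)) + d) = trace (X ** \<rho> t)) at_top"
      using eventually_ge_at_top[of 0] by (rule eventually_mono) (simp add: eq)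
  qed
qed


theorem corollary21:
  fixes H :: "'n::finite cmat"
    and W :: "nat \<Rightarrow> 'n cmat"
    and L :: "nat \<Rightarrow> 'n cmat"
    and N n M K :: nat
  assumes H_herm: "hermitian H"
    and W_psd: "\<And>j. j \<in> {1..N} \<Longrightarrow> psd (W j)"
    and W_min: "\<And>j. j \<in> {1..N} \<Longrightarrow> min_eig (W j) = 0"
    and W_comm: "\<And>j. j \<in> {1..N} \<Longrightarrow> W j ** H = H ** W j"
    and n_ge: "1 \<le> n" and n_lt: "n < N"
    and M_le: "M \<le> K"
  defines "Wt \<equiv> (\<lambda>m. \<Sum>j\<in>{1..m}. W j)"
    and "d \<equiv> min_eig (\<Sum>j\<in>{1..n}. W j)"
  shows
    "((\<exists>c>0. op_le (gen H L {1..M} (Wt n - const d)) ((-c) *\<^sub>R (Wt n - const d)) \<and>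
              op_le (gen H L {1..K} (W (n+1)) + (\<Sum>k\<in>{M+1..K}. genL (L k) (Wt n)))
                    ((-c) *\<^sub>R W (n+1)))
       \<longrightarrow> ags_stable H L {1..K} (Wt (n+1)))
   \<and> ((\<exists>c>0. op_le (gen H L {1..M} (Wt n)) 0 \<and>
              op_le (c *\<^sub>R (Wt n - const d)) (diss H L {1..M} (Wt n - const d)) \<and>
              op_le (gen H L {1..K} (W (n+1)) + (\<Sum>k\<in>{M+1..K}. genL (L k) (Wt n))) 0 \<and>
              op_le (c *\<^sub>R W (n+1))
                    (diss H L {1..K} (W (n+1)) +
                     2 *\<^sub>R (\<Sum>k\<in>{1..K}. mRe (comm (cadj (L k)) (Wt n) ** comm (W (n+1)) (L k)))))
       \<longrightarrow> ags_stable H L {1..K} (Wt (n+1)))"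
proof -
  define W1 where "W1 = W (n+1)"
  have pW1: "psd W1" unfolding W1_def by (rule W_psd) (use n_lt in auto)
  have hW1: "cadj W1 = W1" using pW1 by (simp add: psd_def hermitian_def)
  have hWt: "hermitian (Wt n)"
  proof -
    have "cadj (W j) = W j" if "j \<in> {1..n}" for j using W_psd[of j] that n_lt by (auto simp: psd_def hermitian_def)
    then show ?thesis unfolding Wt_def by (simp add: hermitian_def cadj_sum)
  qed
  have dd: "d = min_eig (Wt n)" unfolding d_def Wt_def ..
  define A where "A = Wt n - const d"
  have pA: "psd A" using min_eig_props[OF hWt] by (simp add: A_def dd)
  have hA: "cadj A = A" using pA by (simp add: psd_def hermitian_def)
  have WtS: "Wt (n+1) = Wt n + W1"
  proof -
    have "{1..n+1} = insert (n+1) {1..n}" by auto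
    then show ?thesis unfolding Wt_def W1_def by (simp add: add.commute)
  qed
  have VA: "Wt (n+1) - const d = A + W1" unfolding WtS A_def by (simp add: algebra_simps)
  have pV: "psd (Wt (n+1) - const d)" unfolding VA by (rule psd_add[OF pA pW1])
  have hX: "hermitian (Wt (n+1))" using hWt hW1 unfolding WtS by (simp add: hermitian_def cadj_add)
  have sumA: "(\<Sum>k\<in>{M+1..K}. genL (L k) A) = (\<Sum>k\<in>{M+1..K}. genL (L k) (Wt n))"
    by (simp add: A_def genL_diff genL_const)
  have genV: "gen H L {1..K} (A + W1) = gen H L {1..M} A
      + (gen H L {1..K} W1 + (\<Sum>k\<in>{M+1..K}. genL (L k) (Wt n)))"
    unfolding gen_add gen_split[OF M_le, of H L A] sumA by (simp add: algebra_simps)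
  show ?thesis
  proof (intro conjI impI)
    assume "\<exists>c>0. op_le (gen H L {1..M} (Wt n - const d)) ((-c) *\<^sub>R (Wt n - const d)) \<and>
              op_le (gen H L {1..K} (W (n+1)) + (\<Sum>k\<in>{M+1..K}. genL (L k) (Wt n))) ((-c) *\<^sub>R W (n+1))"
    then obtain c where c: "c > 0" and h1: "op_le (gen H L {1..M} A) ((-c) *\<^sub>R A)"
      and h2: "op_le (gen H L {1..K} W1 + (\<Sum>k\<in>{M+1..K}. genL (L k) (Wt n))) ((-c) *\<^sub>R W1)"
      by (auto simp: A_def W1_def)
    have G: "op_le (gen H L {1..K} (A + W1)) ((-c) *\<^sub>R (A + W1))"
      unfolding genV scaleR_add_right by (rule op_le_add[OF h1 h2])
    show "ags_stable H L {1..K} (Wt (n+1))"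
    proof (rule final_from_core[OF H_herm hX pV])
      fix \<rho> assume tr: "traj H L {1..K} \<rho>"
      show "((\<lambda>t. Re (trace ((Wt (n + 1) - const d) ** \<rho> t))) \<longlongrightarrow> 0) at_top"
        unfolding VA by (rule stable_core_i[OF H_herm tr psd_add[OF pA pW1] c G])
    qed
  next
    assume "\<exists>c>0. op_le (gen H L {1..M} (Wt n)) 0 \<and>
              op_le (c *\<^sub>R (Wt n - const d)) (diss H L {1..M} (Wt n - const d)) \<and>
              op_le (gen H L {1..K} (W (n+1)) + (\<Sum>k\<in>{M+1..K}. genL (L k) (Wt n))) 0 \<and>
              op_le (c *\<^sub>R W (n+1))
                    (diss H L {1..K} (W (n+1)) +
                     2 *\<^sub>R (\<Sum>k\<in>{1..K}. mRe (comm (cadj (L k)) (Wt n) ** comm (W (n+1)) (L k))))"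
    then obtain c where c: "c > 0" and h1: "op_le (gen H L {1..M} (Wt n)) 0"
      and h2: "op_le (c *\<^sub>R A) (diss H L {1..M} A)"
      and h3: "op_le (gen H L {1..K} W1 + (\<Sum>k\<in>{M+1..K}. genL (L k) (Wt n))) 0"
      and h4: "op_le (c *\<^sub>R W1) (diss H L {1..K} W1 +
                     2 *\<^sub>R (\<Sum>k\<in>{1..K}. mRe (comm (cadj (L k)) (Wt n) ** comm W1 (L k))))"
      by (auto simp: A_def W1_def)
    have gA: "gen H L {1..M} A = gen H L {1..M} (Wt n)" by (simp add: A_def gen_diff gen_const)
    have G: "op_le (gen H L {1..K} (A + W1)) 0"
      using op_le_add[OF h1 h3] unfolding genV gA by simp
    have cA: "comm (cadj (L k)) A = comm (cadj (L k)) (Wt n)" for k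
      by (simp add: A_def comm_diff_right comm_const_right)
    have dA: "diss H L {1..K} A = diss H L {1..M} A + (\<Sum>k\<in>{M+1..K}. comm (cadj (L k)) A ** comm A (L k))"
    proof -
      have u: "{1..K} = {1..M} \<union> {M+1..K}" using M_le by auto
      have "(\<Sum>k\<in>{1..K}. comm (cadj (L k)) A ** comm A (L k)) = (\<Sum>k\<in>{1..M}. comm (cadj (L k)) A ** comm A (L k))
          + (\<Sum>k\<in>{M+1..K}. comm (cadj (L k)) A ** comm A (L k))"
        unfolding u by (rule sum.union_disjoint) auto
      then show ?thesis by (simp add: diss_herm[OF hA])
    qed
    have dV: "diss H L {1..K} (A + W1) = diss H L {1..M} A + (\<Sum>k\<in>{M+1..K}. comm (cadj (L k)) A ** comm A (L k))
        + (diss H L {1..K} W1 + 2 *\<^sub>R (\<Sum>k\<in>{1..K}. mRe (comm (cadj (L k)) (Wt n) ** comm W1 (L k))))"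
      unfolding diss_cross[OF hA hW1] dA cA by (simp add: algebra_simps)
    have ps: "op_le 0 (\<Sum>k\<in>{M+1..K}. comm (cadj (L k)) A ** comm A (L k))"
      unfolding op_le_def by (simp add: psd_sum psd_comm_sq[OF hA])
    have D: "op_le (c *\<^sub>R (A + W1)) (diss H L {1..K} (A + W1))"
      unfolding dV scaleR_add_right using op_le_add[OF op_le_add[OF h2 ps] h4] by simp
    show "ags_stable H L {1..K} (Wt (n+1))"
    proof (rule final_from_core[OF H_herm hX pV])
      fix \<rho> assume tr: "traj H L {1..K} \<rho>"
      show "((\<lambda>t. Re (trace ((Wt (n + 1) - const d) ** \<rho> t))) \<longlongrightarrow> 0) at_top"
        unfolding VA by (rule stable_core_ii[OF H_herm tr psd_add[OF pA pW1] c G D])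
    qed
  qed
qed


end
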